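(* Let $n\ge 1$. For $\alpha=(a_n,\ldots,a_1)$ ranging over restricted sequences of length $n$, let $e'_\alpha\in V_n$ be the elements defined recursively below. Then $\{e'_\alpha\}$ is an orthogonal basis of $V_n$ for the Markov form, and more precisely: (i) $\langle e'_\alpha,e'_\alpha\rangle_n=\dfrac{\Delta_{a_n}}{\Delta_{a_n-1}}\cdots\dfrac{\Delta_{a_1}}{\Delta_{a_1-1}}$; (ii) if $\beta\neq\alpha$ are restricted sequences of length $n$, then $\langle e'_\beta,e'_\alpha\rangle_n=0$.
   Context: A non-crossing $n$-chord diagram is (the isotopy class of) a set of $n$ pairwise disjoint arcs in the closed upper half-plane with endpoints at $1,2,\ldots,2n$ on the real line; equivalently a non-crossing perfect matching of $\{1,\ldots,2n\}$. Let $D_n$ be the set of these ($D_0=\{\phi\}$, the empty diagram). For $1\le k\le 2n+1$, $l_k:D_n\to D_{n+1}$ inserts a new innermost arc: in matching terms, $l_k(\alpha)$ matches $k$ with $k+1$, and each old point $i$ becomes $i$ if $i<k$ and $i+2$ if $i\ge k$, with the old pairs kept. For $\alpha\in D_n$ ($n\ge1$) let $k_n$ be the smallest $k$ with $k$ matched to $k+1$ in $\alpha$, and let $\alpha'\in D_{n-1}$ be $\alpha$ with that arc removed (points renumbered order-preservingly), so $\alpha=l_{k_n}(\alpha')$. The restricted sequence of $\alpha$ is $(k_n,k_{n-1},\ldots,k_1)$ where $(k_{n-1},\ldots,k_1)$ is the restricted sequence of $\alpha'$ (the empty sequence for $\phi$). This gives a bijection between $D_n$ and restricted sequences of length $n$;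 write $e_{(a_n,\ldots,a_1)}$ for the diagram with restricted sequence $(a_n,\ldots,a_1)$. Let $q$ be an indeterminate and $V_n$ the $\mathbb{Q}(q)$-vector space with basis $D_n$; extend $l_k$ linearly. The Markov form $\langle\ ,\ \rangle_n$ on $V_n$ is the bilinear extension of $\langle\alpha,\beta\rangle_n=q^{c}$, where $c$ is the number of closed curves obtained by gluing $\alpha$ (in the upper half-plane) to the reflection of $\beta$ in the real axis (in the lower half-plane) along the common endpoints $1,\ldots,2n$. Chebyshev polynomials: $\Delta_{-1}=0$, $\Delta_0=1$, $\Delta_k=q\Delta_{k-1}-\Delta_{k-2}$ for $k\ge1$. The elements $e'_\alpha$: $e'_{(1)}=e_{(1)}$, and for a restricted sequence $(a_n,\ldots,a_1)$ with $n\ge2$, $e'_{(a_n,\ldots,a_1)}=l_{a_n}\big(e'_{(a_{n-1},\ldots,a_1)}\big)-\frac{\Delta_{a_n-2}}{\Delta_{a_n-1}}\,e'_{(a_n-1,a_{n-1},\ldots,a_1)}$ if $a_n\ge2$, and $e'_{(1,a_{n-1},\ldots,a_1)}=l_1\big(e'_{(a_{n-1},\ldots,a_1)}\big)$. *)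

theory Defs
  imports "HOL-Computational_Algebra.Polynomial" "HOL-Computational_Algebra.Fraction_Field"
begin

type_synonym K = "rat poly fract"

definition qq :: K where "qq = Fract [:0, 1:] 1"

text \<open>Chebyshev polynomials Delta_k for k >= 0 (Delta_{-1} = 0 gives Delta_1 = q).\<close>
fun Delta :: "nat \<Rightarrow> K" where
  "Delta 0 = 1"
| "Delta (Suc 0) = qq"
| "Delta (Suc (Suc k)) = qq * Delta (Suc k) - Delta k"

text \<open>A chord diagram is represented by its set of arcs (i,j), i<j.\<close>
type_synonym diagram = "(nat \<times> nat) set"

definition D :: "nat \<Rightarrow> diagram set" where
  "D n = {\<alpha>. \<alpha> \<subseteq> {1..2*n} \<times> {1..2*n}
            \<and> (\<forall>(i,j)\<in>\<alpha>. i < j)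
            \<and> (\<forall>x\<in>{1..2*n}. \<exists>!p. p \<in> \<alpha> \<and> (fst p = x \<or> snd p = x))
            \<and> (\<forall>(a,b)\<in>\<alpha>. \<forall>(c,d)\<in>\<alpha>. \<not> (a < c \<and> c < b \<and> b < d))}"

definition l :: "nat \<Rightarrow> diagram \<Rightarrow> diagram" where
  "l k \<alpha> = insert (k, Suc k)
     ((\<lambda>(i,j). (if i < k then i else i + 2, if j < k then j else j + 2)) ` \<alpha>)"

definition kmin :: "diagram \<Rightarrow> nat" where
  "kmin \<alpha> = (LEAST k. (k, Suc k) \<in> \<alpha>)"

definition remove_arc :: "diagram \<Rightarrow> nat \<Rightarrow> diagram" where
  "remove_arc \<alpha> k = (\<lambda>(i,j). (if i < k then i else i - 2, if j < k then j else j - 2))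
                       ` (\<alpha> - {(k, Suc k)})"

text \<open>Restricted sequence (k_n, ..., k_1) of a diagram in D_n, as a list with head k_n.\<close>
fun rseq :: "nat \<Rightarrow> diagram \<Rightarrow> nat list" where
  "rseq 0 \<alpha> = []"
| "rseq (Suc n) \<alpha> = kmin \<alpha> # rseq n (remove_arc \<alpha> (kmin \<alpha>))"

definition RS :: "nat \<Rightarrow> nat list set" where
  "RS n = rseq n ` D n"

text \<open>Vectors of V_n: functions from diagrams to K (supported on D n).\<close>
type_synonym vec = "diagram \<Rightarrow> K"

definition delta :: "diagram \<Rightarrow> vec" where
  "delta \<alpha> = (\<lambda>\<beta>. if \<beta> = \<alpha> then 1 else 0)"

definition lin_l :: "nat \<Rightarrow> nat \<Rightarrow> vec \<Rightarrow> vec" where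
  "lin_l n k v = (\<lambda>\<beta>. \<Sum>\<alpha>\<in>D n. if l k \<alpha> = \<beta> then v \<alpha> else 0)"

text \<open>Number of closed curves obtained by gluing alpha and reflected beta.\<close>
definition loops :: "nat \<Rightarrow> diagram \<Rightarrow> diagram \<Rightarrow> nat" where
  "loops n \<alpha> \<beta> = card ({1..2*n} // (((\<alpha> \<union> \<beta>) \<union> (\<alpha> \<union> \<beta>)\<inverse>)\<^sup>*))"

definition markov :: "nat \<Rightarrow> vec \<Rightarrow> vec \<Rightarrow> K" where
  "markov n v w = (\<Sum>\<alpha>\<in>D n. \<Sum>\<beta>\<in>D n. v \<alpha> * w \<beta> * qq ^ loops n \<alpha> \<beta>)"

text \<open>The elements e'_alpha, indexed by lists [a_n, ..., a_1].\<close>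
function ep :: "nat list \<Rightarrow> vec" where
  "ep [] = delta {}"
| "ep (a # as) =
     (if as = [] then delta {(1, 2)}
      else if 2 \<le> a then
        (\<lambda>\<beta>. lin_l (length as) a (ep as) \<beta>
              - (Delta (a - 2) / Delta (a - 1)) * ep ((a - 1) # as) \<beta>)
      else lin_l (length as) 1 (ep as))"
  by pat_completeness auto
termination
  by (relation "measure (\<lambda>s. sum_list s + length s)") auto

end

theory Submission
  imports Defs "HOL-Library.Function_Algebras"
begin

definition su :: "nat \<Rightarrow> nat \<Rightarrow> nat" where "su k u = (if u < k then u else u + 2)"
definition sd :: "nat \<Rightarrow> nat \<Rightarrow> nat" where "sd k u = (if u < k then u else u - 2)"
definition adj :: "diagram \<Rightarrow> nat \<Rightarrow> nat \<Rightarrow> bool" where "adj a u v = ((u,v) \<in> a \<or> (v,u) \<in> a)"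

definition mt :: "nat set \<Rightarrow> diagram \<Rightarrow> bool" where
  "mt S a = (a \<subseteq> S \<times> S \<and> (\<forall>(i,j)\<in>a. i < j) \<and> (\<forall>x\<in>S. \<exists>!p. p \<in> a \<and> (fst p = x \<or> snd p = x)))"

definition nc :: "diagram \<Rightarrow> bool" where
  "nc a = (\<forall>(a1,b)\<in>a. \<forall>(c,d)\<in>a. \<not> (a1 < c \<and> c < b \<and> b < d))"

definition M :: "nat \<Rightarrow> diagram set" where "M n = {a. mt {1..2*n} a}"

lemma D_eq: "D n = {a. mt {1..2*n} a \<and> nc a}"
  unfolding D_def mt_def nc_def by (simp only: conj_assoc)

lemma D_M: "a \<in> D n \<Longrightarrow> a \<in> M n"
  by (simp add: D_eq M_def)

lemma finite_D: "finite (D n)"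
proof -
  have "D n \<subseteq> Pow ({1..2*n} \<times> {1..2*n})" unfolding D_def by auto
  moreover have "finite (Pow ({1..2*n} \<times> {1..2*n}))" by simp
  ultimately show ?thesis by (rule finite_subset)
qed

lemma sd_su[simp]: "sd k (su k u) = u" by (simp add: su_def sd_def)
lemma su_sd[simp]: "u \<noteq> k \<Longrightarrow> u \<noteq> Suc k \<Longrightarrow> su k (sd k u) = u" unfolding su_def sd_def by auto
lemma su_neq1[simp]: "su k u \<noteq> k" and su_neq2[simp]: "su k u \<noteq> Suc k"
  by (auto simp add: su_def)
lemma su_inj[simp]: "(su k u = su k v) = (u = v)" by (auto simp add: su_def)
lemma su_less[simp]: "(su k u < su k v) = (u < v)" by (auto simp add: su_def)
lemma sd_inj: "u \<notin> {k, Suc k} \<Longrightarrow> v \<notin> {k, Suc k} \<Longrightarrow> (sd k u = sd k v) = (u = v)"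
  by (auto simp add: sd_def)
lemma sd_less: "u \<notin> {k, Suc k} \<Longrightarrow> v \<notin> {k, Suc k} \<Longrightarrow> (sd k u < sd k v) = (u < v)"
  by (auto simp add: sd_def)

lemma adj_sym: "adj a u v = adj a v u" by (auto simp: adj_def)

lemma mem_l: "(u,v) \<in> l j g \<longleftrightarrow> (u = j \<and> v = Suc j) \<or> (u \<notin> {j, Suc j} \<and> v \<notin> {j, Suc j} \<and> (sd j u, sd j v) \<in> g)"
proof -
  have "(u,v) \<in> (\<lambda>(i,k). (if i < j then i else i + 2, if k < j then k else k + 2)) ` g \<longleftrightarrow>
        (u \<notin> {j, Suc j} \<and> v \<notin> {j, Suc j} \<and> (sd j u, sd j v) \<in> g)"
  proof
    assume "(u,v) \<in> (\<lambda>(i,k). (if i < j then i else i + 2, if k < j then k else k + 2)) ` g"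
    then obtain a b where "(a,b) \<in> g" "u = su j a" "v = su j b" by (auto simp: su_def)
    then show "u \<notin> {j, Suc j} \<and> v \<notin> {j, Suc j} \<and> (sd j u, sd j v) \<in> g" by auto
  next
    assume h: "u \<notin> {j, Suc j} \<and> v \<notin> {j, Suc j} \<and> (sd j u, sd j v) \<in> g"
    then have "(u,v) = (su j (sd j u), su j (sd j v))" by simp
    with h show "(u,v) \<in> (\<lambda>(i,k). (if i < j then i else i + 2, if k < j then k else k + 2)) ` g"
      by (force simp: su_def)
  qed
  then show ?thesis by (simp add: l_def)
qed

lemma adj_l: "adj (l j g) u v \<longleftrightarrow> (u = j \<and> v = Suc j) \<or> (u = Suc j \<and> v = j) \<or>
   (u \<notin> {j, Suc j} \<and> v \<notin> {j, Suc j} \<and> adj g (sd j u) (sd j v))"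
  unfolding adj_def mem_l by auto

lemma adj_l_su: "adj (l j g) (su j u) (su j v) = adj g u v"
  by (simp add: adj_l)

lemma mt_adjD:
  assumes "mt S a" "adj a u v"
  shows "u \<in> S" "v \<in> S" "u \<noteq> v"
  using assms unfolding mt_def adj_def by auto

lemma mt_adj_ex:
  assumes "mt S a" "u \<in> S" shows "\<exists>v. adj a u v"
  using assms unfolding mt_def adj_def by (metis prod.collapse)

lemma mt_adj_unique:
  assumes "mt S a" "adj a u v" "adj a u w" shows "v = w"
proof -
  have uS: "u \<in> S" using mt_adjD assms by blast
  from assms(1) uS obtain p where p: "p \<in> a \<and> (fst p = u \<or> snd p = u)"
     and pu: "\<And>q. q \<in> a \<and> (fst q = u \<or> snd q = u) \<Longrightarrow> q = p"
    unfolding mt_def by metis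
  have ord: "\<And>x y. (x,y) \<in> a \<Longrightarrow> x < y" using assms(1) unfolding mt_def by auto
  from assms(2) have "(u,v) = p \<or> (v,u) = p" unfolding adj_def using pu by force
  moreover from assms(3) have "(u,w) = p \<or> (w,u) = p" unfolding adj_def using pu by force
  ultimately show ?thesis using ord assms(2,3) unfolding adj_def by auto
qed

lemma mt_intro:
  assumes ord: "\<And>x y. (x,y) \<in> a \<Longrightarrow> x < y"
    and rng: "\<And>u v. adj a u v \<Longrightarrow> u \<in> S"
    and ex: "\<And>u. u \<in> S \<Longrightarrow> \<exists>v. adj a u v"
    and un: "\<And>u v w. adj a u v \<Longrightarrow> adj a u w \<Longrightarrow> v = w"
  shows "mt S a"
  unfolding mt_def
proof (intro conjI ballI)
  show "a \<subseteq> S \<times> S"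
  proof
    fix p assume "p \<in> a"
    then obtain p1 p2 where pp: "p = (p1,p2)" "(p1,p2) \<in> a" by (cases p) auto
    then have "adj a p1 p2" "adj a p2 p1" unfolding adj_def by auto
    then show "p \<in> S \<times> S" using rng pp by blast
  qed
  show "\<And>x. x \<in> a \<Longrightarrow> case x of (i, j) \<Rightarrow> i < j" using ord by auto
  fix x assume "x \<in> S"
  then obtain v where v: "adj a x v" using ex by blast
  have Q: "q = (x,v) \<or> q = (v,x)" if q: "q \<in> a" "fst q = x \<or> snd q = x" for q
  proof -
    obtain q1 q2 where qq: "q = (q1,q2)" by (cases q)
    show ?thesis
    proof (cases "q1 = x")
      case True
      then have "adj a x q2" using q qq unfolding adj_def by auto
      then have "q2 = v" using un v by blast
      then show ?thesis using True qq by simp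
    next
      case False
      then have "q2 = x" using q qq by auto
      then have "adj a x q1" using q qq unfolding adj_def by auto
      then have "q1 = v" using un v by blast
      then show ?thesis using \<open>q2 = x\<close> qq by simp
    qed
  qed
  show "\<exists>!p. p \<in> a \<and> (fst p = x \<or> snd p = x)"
  proof (cases "(x,v) \<in> a")
    case True
    show ?thesis
    proof (rule ex1I[of _ "(x,v)"])
      show "(x,v) \<in> a \<and> (fst (x,v) = x \<or> snd (x,v) = x)" using True by simp
      fix q assume q: "q \<in> a \<and> (fst q = x \<or> snd q = x)"
      then have "q = (x,v) \<or> q = (v,x)" using Q by blast
      moreover have "(v,x) \<notin> a" using ord[of x v] ord[of v x] True by auto
      ultimately show "q = (x,v)" using q by blast
    qed
  next
    case False
    then have vx: "(v,x) \<in> a" using v adj_def by auto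
    show ?thesis
    proof (rule ex1I[of _ "(v,x)"])
      show "(v,x) \<in> a \<and> (fst (v,x) = x \<or> snd (v,x) = x)" using vx by simp
      fix q assume q: "q \<in> a \<and> (fst q = x \<or> snd q = x)"
      then have "q = (x,v) \<or> q = (v,x)" using Q by blast
      then show "q = (v,x)" using q False by blast
    qed
  qed
qed

lemma su_range: "x \<in> {1..2*m} \<Longrightarrow> 1 \<le> j \<Longrightarrow> j \<le> 2*m+1 \<Longrightarrow> su j x \<in> {1..2*Suc m}"
  by (auto simp: su_def)
lemma su_range_rev: "su i u \<in> {1..2*Suc m} \<Longrightarrow> 1 \<le> i \<Longrightarrow> i \<le> 2*m+1 \<Longrightarrow> u \<in> {1..2*m}"
  by (auto simp: su_def split: if_splits)
lemma sd_range: "u \<in> {1..2*Suc m} \<Longrightarrow> u \<notin> {j, Suc j} \<Longrightarrow> 1 \<le> j \<Longrightarrow> j \<le> 2*m+1 \<Longrightarrow> sd j u \<in> {1..2*m}"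
  by (auto simp: sd_def)

lemma l_M:
  assumes g: "g \<in> M m" and j: "1 \<le> j" "j \<le> 2*m+1"
  shows "l j g \<in> M (Suc m)"
  unfolding M_def mem_Collect_eq
proof (rule mt_intro)
  have mg: "mt {1..2*m} g" using g M_def by auto
  show "x < y" if "(x,y) \<in> l j g" for x y
  proof -
    have ord: "\<And>x y. (x,y) \<in> g \<Longrightarrow> x < y" using mg unfolding mt_def by auto
    from that consider "x = j \<and> y = Suc j" | "x \<notin> {j,Suc j}" "y \<notin> {j,Suc j}" "(sd j x, sd j y) \<in> g"
      unfolding mem_l by blast
    then show ?thesis
    proof cases
      case 2
      then have "sd j x < sd j y" using ord by blast
      then show ?thesis using sd_less[OF 2(1,2)] by simp
    qed simp
  qed
  show "u \<in> {1..2*Suc m}" if "adj (l j g) u v" for u v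
  proof -
    from that consider "u = j" | "u = Suc j" | "u \<notin> {j, Suc j}" "adj g (sd j u) (sd j v)"
      unfolding adj_l by blast
    then show ?thesis
    proof cases
      case 3
      then have "sd j u \<in> {1..2*m}" using mt_adjD[OF mg] by blast
      from su_range[OF this j] 3 show ?thesis by simp
    qed (use j in auto)
  qed
  show "\<exists>v. adj (l j g) u v" if "u \<in> {1..2*Suc m}" for u
  proof (cases "u \<in> {j, Suc j}")
    case True then show ?thesis unfolding adj_l by auto
  next
    case False
    then have "sd j u \<in> {1..2*m}" using sd_range that j by blast
    then obtain w where "adj g (sd j u) w" using mt_adj_ex[OF mg] by blast
    then have "adj (l j g) (su j (sd j u)) (su j w)" by (simp add: adj_l_su)
    then show ?thesis using False by auto
  qed
  show "v = w" if "adj (l j g) u v" "adj (l j g) u w" for u v w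
  proof (cases "u \<in> {j, Suc j}")
    case True then show ?thesis using that unfolding adj_l by auto
  next
    case False
    then have "v \<notin> {j, Suc j}" "w \<notin> {j, Suc j}" "adj g (sd j u) (sd j v)" "adj g (sd j u) (sd j w)"
      using that unfolding adj_l by auto
    then show ?thesis using mt_adj_unique[OF mg] sd_inj by metis
  qed
qed

lemma l_D:
  assumes g: "g \<in> D m" and j: "1 \<le> j" "j \<le> 2*m+1"
  shows "l j g \<in> D (Suc m)"
proof -
  have "l j g \<in> M (Suc m)" using l_M D_M g j by blast
  moreover have "nc (l j g)"
  proof -
    have ncg: "nc g" using g D_eq by auto
    show ?thesis unfolding nc_def
    proof (clarify)
      fix a b c d assume h: "(a,b) \<in> l j g" "(c,d) \<in> l j g" "a < c" "c < b" "b < d"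
      show False
      proof (cases "a = j \<and> b = Suc j")
        case True then show ?thesis using h by auto
      next
        case F1: False
        then have A: "a \<notin> {j, Suc j}" "b \<notin> {j, Suc j}" "(sd j a, sd j b) \<in> g" using h(1) mem_l by auto
        show ?thesis
        proof (cases "c = j \<and> d = Suc j")
          case True then show ?thesis using h by auto
        next
          case False
          then have C: "c \<notin> {j, Suc j}" "d \<notin> {j, Suc j}" "(sd j c, sd j d) \<in> g" using h(2) mem_l by auto
          have "sd j a < sd j c" "sd j c < sd j b" "sd j b < sd j d" using A C h sd_less by auto
          then show ?thesis using ncg A C unfolding nc_def by blast
        qed
      qed
    qed
  qed
  ultimately show ?thesis by (simp add: D_eq M_def)
qed

lemma l_inj: "l k a = l k b \<Longrightarrow> a = b"
proof -
  assume h: "l k a = l k b"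
  have "\<And>u v. (u,v) \<in> a \<longleftrightarrow> (su k u, su k v) \<in> l k a" by (simp add: mem_l)
  moreover have "\<And>u v. (u,v) \<in> b \<longleftrightarrow> (su k u, su k v) \<in> l k b" by (simp add: mem_l)
  ultimately show ?thesis using h by auto
qed

definition cadj :: "nat \<Rightarrow> diagram \<Rightarrow> nat \<Rightarrow> nat \<Rightarrow> bool" where
  "cadj i b u v = (adj b (su i u) (su i v) \<or> (adj b (su i u) i \<and> adj b (su i v) (Suc i))
       \<or> (adj b (su i u) (Suc i) \<and> adj b (su i v) i))"
definition cap :: "nat \<Rightarrow> diagram \<Rightarrow> diagram" where
  "cap i b = {(u,v). u < v \<and> cadj i b u v}"

lemma cadj_sym: "cadj i b u v = cadj i b v u"
  unfolding cadj_def using adj_sym by blast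

lemma adj_cap: "adj (cap i b) u v \<longleftrightarrow> u \<noteq> v \<and> cadj i b u v"
  unfolding adj_def cap_def using cadj_sym by auto

lemma cap_M:
  assumes b: "b \<in> M (Suc m)" and i: "1 \<le> i" "i \<le> 2*m+1"
  shows "cap i b \<in> M m"
  unfolding M_def mem_Collect_eq
proof (rule mt_intro)
  have mb: "mt {1..2*Suc m} b" using b M_def by auto
  note U = mt_adj_unique[OF mb]
  note A = mt_adjD[OF mb]
  show "x < y" if "(x,y) \<in> cap i b" for x y using that cap_def by auto
  show "u \<in> {1..2*m}" if "adj (cap i b) u v" for u v
  proof -
    have "cadj i b u v" using that adj_cap by auto
    then have "su i u \<in> {1..2*Suc m}" unfolding cadj_def using A by blast
    then show ?thesis using su_range_rev i by blast
  qed
  have iS: "i \<in> {1..2*Suc m}" "Suc i \<in> {1..2*Suc m}" using i by auto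
  show "\<exists>v. adj (cap i b) u v" if u: "u \<in> {1..2*m}" for u
  proof -
    have suS: "su i u \<in> {1..2*Suc m}" using su_range u i by blast
    obtain w where w: "adj b (su i u) w" using mt_adj_ex[OF mb suS] by blast
    consider "w \<notin> {i, Suc i}" | "w = i" | "w = Suc i" by auto
    then show ?thesis
    proof cases
      case 1
      then have "cadj i b u (sd i w)" using w unfolding cadj_def by simp
      moreover have "u \<noteq> sd i w"
      proof
        assume "u = sd i w" then have "su i u = w" using 1 by simp
        then show False using w A by blast
      qed
      ultimately show ?thesis using adj_cap by blast
    next
      case 2
      obtain y where y: "adj b (Suc i) y" using mt_adj_ex[OF mb iS(2)] by blast
      have "y \<noteq> Suc i" using y A by blast
      moreover have "y \<noteq> i"
      proof
        assume "y = i"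
        then have "adj b i (Suc i)" "adj b i (su i u)" using y w 2 adj_sym by metis+
        then show False using U su_neq2 by metis
      qed
      ultimately have suy: "su i (sd i y) = y" by simp
      have "cadj i b u (sd i y)" unfolding cadj_def using w 2 y suy adj_sym by metis
      moreover have "u \<noteq> sd i y"
      proof
        assume "u = sd i y" then have "su i u = y" using suy by simp
        then have "adj b (su i u) (Suc i)" using y adj_sym by metis
        then show False using w 2 U by fastforce
      qed
      ultimately show ?thesis using adj_cap by blast
    next
      case 3
      obtain y where y: "adj b i y" using mt_adj_ex[OF mb iS(1)] by blast
      have "y \<noteq> i" using y A by blast
      moreover have "y \<noteq> Suc i"
      proof
        assume "y = Suc i"
        then have "adj b (Suc i) i" "adj b (Suc i) (su i u)" using y w 3 adj_sym by metis+
        then show False using U su_neq1 by metis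
      qed
      ultimately have suy: "su i (sd i y) = y" by simp
      have "cadj i b u (sd i y)" unfolding cadj_def using w 3 y suy adj_sym by metis
      moreover have "u \<noteq> sd i y"
      proof
        assume "u = sd i y" then have "su i u = y" using suy by simp
        then have "adj b (su i u) i" using y adj_sym by metis
        then show False using w 3 U by fastforce
      qed
      ultimately show ?thesis using adj_cap by blast
    qed
  qed
  show "v = w" if "adj (cap i b) u v" "adj (cap i b) u w" for u v w
  proof -
    have c1: "cadj i b u v" and c2: "cadj i b u w" using that adj_cap by auto
    have U': "\<And>x y z. adj b y x \<Longrightarrow> adj b z x \<Longrightarrow> y = z" using U adj_sym by metis
    have "su i v = su i w"
      using c1 c2 unfolding cadj_def
      by (metis U U' su_neq1 su_neq2 n_not_Suc_n)
    then show ?thesis by simp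
  qed
qed

lemma rel_iff: "(p,q) \<in> (a \<union> b) \<union> (a \<union> b)\<inverse> \<longleftrightarrow> adj a p q \<or> adj b p q"
  by (auto simp: adj_def)

lemma equiv_rt: "equiv UNIV ((r \<union> r\<inverse>)\<^sup>*)"
  unfolding equiv_def by (auto simp: refl_on_def sym_Un_converse sym_rtrancl trans_rtrancl)

lemma card_image_kernel:
  assumes "finite S" "\<forall>a\<in>S. \<forall>b\<in>S. (g a = g b) = (h a = h b)"
  shows "card (g ` S) = card (h ` S)"
  using assms
proof (induction S rule: finite_induct)
  case empty then show ?case by simp
next
  case (insert x F)
  then have IH: "card (g ` F) = card (h ` F)" by auto
  have "(g x \<in> g ` F) = (h x \<in> h ` F)" using insert.prems by auto
  then show ?case using IH insert.hyps by (auto simp: card_insert_if)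
qed

lemma quotient_image: "S // R = (\<lambda>a. R``{a}) ` S"
  by (auto simp: quotient_def)

lemma card_quotient_map:
  assumes fin: "finite S" and fS: "f ` S = S'" and eR: "equiv UNIV R" and eR': "equiv UNIV R'"
    and iff: "\<And>a b. a \<in> S \<Longrightarrow> b \<in> S \<Longrightarrow> (a,b) \<in> R \<longleftrightarrow> (f a, f b) \<in> R'"
  shows "card (S // R) = card (S' // R')"
proof -
  have "S' // R' = (\<lambda>a. R'``{f a}) ` S" unfolding quotient_image fS[symmetric] by auto
  moreover have "card ((\<lambda>a. R``{a}) ` S) = card ((\<lambda>a. R'``{f a}) ` S)"
    apply (rule card_image_kernel[OF fin])
    using iff eq_equiv_class_iff[OF eR] eq_equiv_class_iff[OF eR'] by simp
  ultimately show ?thesis by (simp add: quotient_image)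
qed

lemma loops_E: "loops n a b = card ({1..2*n} // ((a \<union> b) \<union> (a \<union> b)\<inverse>)\<^sup>*)"
  by (simp add: loops_def)

lemma loops_sym: "loops n a b = loops n b a"
  by (simp add: loops_def Un_commute)

context
  fixes g b m j
  assumes g: "g \<in> M m" and b: "b \<in> M (Suc m)" and j1: "1 \<le> j" and j2: "j \<le> 2*m+1"
begin

abbreviation "E \<equiv> ((l j g \<union> b) \<union> (l j g \<union> b)\<inverse>)\<^sup>*"
abbreviation "E' \<equiv> ((g \<union> cap j b) \<union> (g \<union> cap j b)\<inverse>)\<^sup>*"

lemma mb: "mt {1..2*Suc m} b" using b M_def by auto
lemma mg: "mt {1..2*m} g" using g M_def by auto

lemma Eedge: assumes "adj (l j g) p q \<or> adj b p q" shows "(p,q) \<in> E"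
proof (rule r_into_rtrancl)
  show "(p,q) \<in> (l j g \<union> b) \<union> (l j g \<union> b)\<inverse>" using assms by (simp only: rel_iff)
qed
lemma E'edge: assumes "adj g p q \<or> adj (cap j b) p q" shows "(p,q) \<in> E'"
proof (rule r_into_rtrancl)
  show "(p,q) \<in> (g \<union> cap j b) \<union> (g \<union> cap j b)\<inverse>" using assms by (simp only: rel_iff)
qed

lemma symE: "sym ((r \<union> r\<inverse>)\<^sup>*)" by (simp add: sym_Un_converse sym_rtrancl)
lemma E_sym: "(p,q) \<in> E \<Longrightarrow> (q,p) \<in> E"
  using symE symD by metis
lemma E'_sym: "(p,q) \<in> E' \<Longrightarrow> (q,p) \<in> E'"
  using symE symD by metis

lemma Ejj: "(j, Suc j) \<in> E" by (rule Eedge) (simp add: adj_l)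

lemma edge_up:
  assumes "adj g c d \<or> adj (cap j b) c d"
  shows "(su j c, su j d) \<in> E"
proof (cases "adj g c d")
  case True
  then show ?thesis using Eedge adj_l_su by blast
next
  case False
  then have "cadj j b c d" using assms adj_cap by blast
  then consider "adj b (su j c) (su j d)" | "adj b (su j c) j" "adj b (su j d) (Suc j)"
    | "adj b (su j c) (Suc j)" "adj b (su j d) j" unfolding cadj_def by blast
  then show ?thesis
  proof cases
    case 1 then show ?thesis using Eedge by blast
  next
    case 2
    have "(su j c, j) \<in> E" "(Suc j, su j d) \<in> E" using 2 Eedge adj_sym by metis+
    then show ?thesis using Ejj by (meson rtrancl_trans)
  next
    case 3
    have "(su j c, Suc j) \<in> E" "(j, su j d) \<in> E" using 3 Eedge adj_sym by metis+
    then show ?thesis using Ejj E_sym by (meson rtrancl_trans)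
  qed
qed

lemma up: "(c,d) \<in> E' \<Longrightarrow> (su j c, su j d) \<in> E"
proof (induction rule: rtrancl_induct)
  case base then show ?case by simp
next
  case (step y z)
  have "adj g y z \<or> adj (cap j b) y z" using rel_iff[of y z g "cap j b"] step.hyps(2) by simp
  then have "(su j y, su j z) \<in> E" by (rule edge_up)
  then show ?case using rtrancl_trans[OF step.IH] by blast
qed

lemma sd_image: "sd j ` ({1..2*Suc m} - {j, Suc j}) = {1..2*m}"
proof
  show "sd j ` ({1..2*Suc m} - {j, Suc j}) \<subseteq> {1..2*m}" using sd_range j1 j2 by blast
  show "{1..2*m} \<subseteq> sd j ` ({1..2*Suc m} - {j, Suc j})"
  proof
    fix w assume "w \<in> {1..2*m}"
    then have "su j w \<in> {1..2*Suc m} - {j, Suc j}" using su_range j1 j2 by auto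
    moreover have "w = sd j (su j w)" by simp
    ultimately show "w \<in> sd j ` ({1..2*Suc m} - {j, Suc j})" by blast
  qed
qed

lemma finS: "finite ({1..2*Suc m} - {j, Suc j})" by simp

lemma case1:
  assumes jb: "(j, Suc j) \<in> b"
  shows "loops (Suc m) (l j g) b = 1 + loops m g (cap j b)"
proof -
  note U = mt_adj_unique[OF mb]
  have ajb: "adj b j (Suc j)" using jb adj_def by auto
  have st: "q \<notin> {j, Suc j} \<and> (sd j p, sd j q) \<in> E'"
    if p: "p \<notin> {j, Suc j}" and e: "adj (l j g) p q \<or> adj b p q" for p q
  proof (cases "adj (l j g) p q")
    case True
    then have "q \<notin> {j, Suc j}" "adj g (sd j p) (sd j q)" using p adj_l by auto
    then show ?thesis using E'edge by blast
  next
    case False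
    then have abq: "adj b p q" using e by blast
    have qJ1: "q \<noteq> j"
    proof
      assume "q = j"
      then have "adj b j p" using abq adj_sym by metis
      then have "p = Suc j" using U[OF _ ajb] by blast
      then show False using p by simp
    qed
    have qJ2: "q \<noteq> Suc j"
    proof
      assume "q = Suc j"
      then have "adj b (Suc j) p" using abq adj_sym by metis
      moreover have "adj b (Suc j) j" using ajb adj_sym by metis
      ultimately have "p = j" using U by blast
      then show False using p by simp
    qed
    have qJ: "q \<notin> {j, Suc j}" using qJ1 qJ2 by blast
    have "p \<noteq> q" using mt_adjD[OF mb abq] by blast
    then have "sd j p \<noteq> sd j q" using sd_inj[OF p qJ] by simp
    moreover have "cadj j b (sd j p) (sd j q)" unfolding cadj_def using p qJ abq by simp
    ultimately have "adj (cap j b) (sd j p) (sd j q)" using adj_cap by blast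
    then show ?thesis using E'edge qJ by blast
  qed
  have inv0: "a \<notin> {j, Suc j} \<longrightarrow> c \<notin> {j, Suc j} \<and> (sd j a, sd j c) \<in> E'" if "(a,c) \<in> E" for a c
    using that
  proof (induction rule: rtrancl_induct)
    case base then show ?case by simp
  next
    case (step y z)
    show ?case
    proof
      assume "a \<notin> {j, Suc j}"
      then have y1: "y \<notin> {j, Suc j}" and y2: "(sd j a, sd j y) \<in> E'" using step.IH by auto
      have "adj (l j g) y z \<or> adj b y z" using rel_iff[of y z "l j g" b] step.hyps(2) by simp
      from st[OF y1 this] have "z \<notin> {j, Suc j}" "(sd j y, sd j z) \<in> E'" by auto
      then show "z \<notin> {j, Suc j} \<and> (sd j a, sd j z) \<in> E'" using rtrancl_trans[OF y2] by blast
    qed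
  qed
  have inv: "c \<notin> {j, Suc j} \<and> (sd j a, sd j c) \<in> E'" if "(a,c) \<in> E" "a \<notin> {j, Suc j}" for a c
    using inv0 that by blast
  define S0 where "S0 = {1..2*Suc m} - {j, Suc j}"
  have c0: "card (S0 // E) = card ({1..2*m} // E')"
  proof (rule card_quotient_map[OF _ _ equiv_rt equiv_rt])
    show "finite S0" using S0_def by simp
    show "sd j ` S0 = {1..2*m}" using sd_image S0_def by simp
    fix a c assume ac: "a \<in> S0" "c \<in> S0"
    show "(a,c) \<in> E \<longleftrightarrow> (sd j a, sd j c) \<in> E'"
    proof
      assume "(a,c) \<in> E" then show "(sd j a, sd j c) \<in> E'" using inv[of a c] ac unfolding S0_def by blast
    next
      assume "(sd j a, sd j c) \<in> E'"
      then have "(su j (sd j a), su j (sd j c)) \<in> E" by (rule up)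
      then show "(a,c) \<in> E" using ac S0_def by simp
    qed
  qed
  have Sdec: "{1..2*Suc m} = insert j (insert (Suc j) S0)" using S0_def j1 j2 by auto
  have EjSj: "E``{Suc j} = E``{j}"
    by (simp only: eq_equiv_class_iff[OF equiv_rt UNIV_I UNIV_I]) (rule E_sym[OF Ejj])
  have notin: "E``{j} \<notin> S0 // E"
  proof
    assume "E``{j} \<in> S0 // E"
    then obtain a where a: "a \<in> S0" "E``{j} = E``{a}" unfolding quotient_image by blast
    then have "(j, a) \<in> E" by (simp only: eq_equiv_class_iff[OF equiv_rt UNIV_I UNIV_I])
    then have "(a, j) \<in> E" by (rule E_sym)
    moreover have "a \<notin> {j, Suc j}" using a(1) unfolding S0_def by blast
    ultimately show False using inv[of a j] by blast
  qed
  have "{1..2*Suc m} // E = insert (E``{j}) (S0 // E)"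
    unfolding Sdec quotient_image image_insert EjSj by simp
  then have "card ({1..2*Suc m} // E) = Suc (card (S0 // E))"
    using notin by (simp add: S0_def quotient_image)
  then show ?thesis using c0 jb by (simp add: loops_E)
qed

lemma case2:
  assumes jb: "(j, Suc j) \<notin> b"
  shows "loops (Suc m) (l j g) b = loops m g (cap j b)"
proof -
  note U = mt_adj_unique[OF mb]
  note A = mt_adjD[OF mb]
  have jS: "j \<in> {1..2*Suc m}" "Suc j \<in> {1..2*Suc m}" using j1 j2 by auto
  obtain x where x: "adj b j x" using mt_adj_ex[OF mb jS(1)] by blast
  obtain y where y: "adj b (Suc j) y" using mt_adj_ex[OF mb jS(2)] by blast
  have nj: "\<not> adj b j (Suc j)"
  proof
    assume "adj b j (Suc j)"
    then have "(Suc j, j) \<in> b" using jb adj_def by auto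
    then show False using mb unfolding mt_def by auto
  qed
  have x1: "x \<noteq> j" using A(3)[OF x] by simp
  have x2: "x \<noteq> Suc j" using x nj by blast
  have y1: "y \<noteq> Suc j" using A(3)[OF y] by simp
  have y2: "y \<noteq> j" using y nj adj_sym by metis
  have xJ: "x \<notin> {j, Suc j}" using x1 x2 by blast
  have yJ: "y \<notin> {j, Suc j}" using y1 y2 by blast
  have xy: "x \<noteq> y"
  proof
    assume "x = y"
    then have "adj b x j" "adj b x (Suc j)" using x y adj_sym by metis+
    from U[OF this] show False by simp
  qed
  have xS: "x \<in> {1..2*Suc m}" using A(2)[OF x] .
  define f where "f = (\<lambda>a. if a \<in> {j, Suc j} then sd j x else sd j a)"
  have st: "(f p, f q) \<in> E'" if e: "adj (l j g) p q \<or> adj b p q" for p q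
  proof (cases "adj (l j g) p q")
    case True
    then consider "p = j" "q = Suc j" | "p = Suc j" "q = j"
      | "p \<notin> {j, Suc j}" "q \<notin> {j, Suc j}" "adj g (sd j p) (sd j q)" unfolding adj_l by blast
    then show ?thesis
    proof cases
      case 3 then show ?thesis unfolding f_def using E'edge[of "sd j p" "sd j q"] by simp
    qed (simp_all add: f_def)
  next
    case False
    then have abq: "adj b p q" using e by blast
    have pq: "p \<noteq> q" using A(3)[OF abq] .
    consider "p = j" | "p = Suc j" | "q = j" | "q = Suc j" | "p \<notin> {j, Suc j}" "q \<notin> {j, Suc j}" by blast
    then show ?thesis
    proof cases
      case 1
      then have "q = x" using U[OF _ x] abq by blast
      then show ?thesis using 1 xJ unfolding f_def by simp
    next
      case 2
      then have q: "q = y" using U[OF _ y] abq by blast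
      have "cadj j b (sd j x) (sd j y)" unfolding cadj_def using xJ yJ x y adj_sym by simp
      moreover have "sd j x \<noteq> sd j y" using sd_inj[OF xJ yJ] xy by simp
      ultimately have "adj (cap j b) (sd j x) (sd j y)" using adj_cap by blast
      then show ?thesis using 2 q yJ E'edge unfolding f_def by simp
    next
      case 3
      then have "adj b j p" using abq adj_sym by metis
      then have "p = x" using U[OF _ x] by blast
      then show ?thesis using 3 xJ unfolding f_def by simp
    next
      case 4
      then have "adj b (Suc j) p" using abq adj_sym by metis
      then have q: "p = y" using U[OF _ y] by blast
      have "cadj j b (sd j y) (sd j x)" unfolding cadj_def using xJ yJ x y adj_sym by simp
      moreover have "sd j y \<noteq> sd j x" using sd_inj[OF yJ xJ] xy by simp
      ultimately have "adj (cap j b) (sd j y) (sd j x)" using adj_cap by blast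
      then show ?thesis using 4 q yJ E'edge unfolding f_def by simp
    next
      case 5
      have "cadj j b (sd j p) (sd j q)" unfolding cadj_def using 5 abq by simp
      moreover have "sd j p \<noteq> sd j q" using sd_inj[OF 5] pq by simp
      ultimately have "adj (cap j b) (sd j p) (sd j q)" using adj_cap by blast
      then show ?thesis using 5 E'edge unfolding f_def by simp
    qed
  qed
  have fwd: "(f a, f c) \<in> E'" if "(a,c) \<in> E" for a c
    using that
  proof (induction rule: rtrancl_induct)
    case base then show ?case by simp
  next
    case (step y z)
    have "adj (l j g) y z \<or> adj b y z" using rel_iff[of y z "l j g" b] step.hyps(2) by simp
    from st[OF this] show ?case by (rule rtrancl_trans[OF step.IH])
  qed
  have bk: "(a, su j (f a)) \<in> E" for a
  proof (cases "a \<in> {j, Suc j}")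
    case False then show ?thesis unfolding f_def by simp
  next
    case True
    have sux: "su j (f a) = x" using True xJ unfolding f_def by simp
    have jx: "(j, x) \<in> E" using Eedge x by blast
    show ?thesis
    proof (cases "a = j")
      case True then show ?thesis using sux jx by simp
    next
      case False
      then have "a = Suc j" using \<open>a \<in> {j, Suc j}\<close> by blast
      then show ?thesis using sux rtrancl_trans[OF E_sym[OF Ejj] jx] by simp
    qed
  qed
  have fimg: "f ` {1..2*Suc m} = {1..2*m}"
  proof
    show "f ` {1..2*Suc m} \<subseteq> {1..2*m}"
    proof
      fix w assume "w \<in> f ` {1..2*Suc m}"
      then obtain a where a: "a \<in> {1..2*Suc m}" "w = f a" by blast
      show "w \<in> {1..2*m}"
      proof (cases "a \<in> {j, Suc j}")
        case True then show ?thesis using a sd_range[OF xS xJ j1 j2] unfolding f_def by simp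
      next
        case False then show ?thesis using a sd_range[OF a(1) False j1 j2] unfolding f_def by simp
      qed
    qed
    show "{1..2*m} \<subseteq> f ` {1..2*Suc m}"
    proof
      fix w assume "w \<in> {1..2*m}"
      then have "su j w \<in> {1..2*Suc m}" using su_range j1 j2 by blast
      moreover have "f (su j w) = w" unfolding f_def by simp
      ultimately show "w \<in> f ` {1..2*Suc m}" by (metis imageI)
    qed
  qed
  have "card ({1..2*Suc m} // E) = card ({1..2*m} // E')"
  proof (rule card_quotient_map[OF _ fimg equiv_rt equiv_rt])
    show "finite {1..2*Suc m}" by simp
    fix a c
    show "(a,c) \<in> E \<longleftrightarrow> (f a, f c) \<in> E'"
    proof
      assume "(a,c) \<in> E" then show "(f a, f c) \<in> E'" by (rule fwd)
    next
      assume "(f a, f c) \<in> E'"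
      then have "(su j (f a), su j (f c)) \<in> E" by (rule up)
      then have "(a, su j (f c)) \<in> E" by (rule rtrancl_trans[OF bk])
      then show "(a, c) \<in> E" by (rule rtrancl_trans[OF _ E_sym[OF bk[of c]]])
    qed
  qed
  then show ?thesis by (simp add: loops_E)
qed

lemma loops_l:
  "loops (Suc m) (l j g) b = (if (j, Suc j) \<in> b then 1 else 0) + loops m g (cap j b)"
  using case1 case2 by simp

end

definition ordd :: "diagram \<Rightarrow> bool" where "ordd g = (\<forall>(u,v)\<in>g. u < v)"

lemma ordd_mem: assumes "ordd g" shows "(u,v) \<in> g \<longleftrightarrow> u < v \<and> adj g u v"
proof -
  have o: "(x,y) \<in> g \<Longrightarrow> x < y" for x y using assms unfolding ordd_def by blast
  show ?thesis using o[of u v] o[of v u] by (auto simp: adj_def)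
qed

lemma mem_cap: "(u,v) \<in> cap i b \<longleftrightarrow> u < v \<and> cadj i b u v" by (simp add: cap_def)

lemma T1:
  assumes "ordd g" shows "cap j (l j g) = g"
proof (intro set_eqI, clarify)
  fix u v
  have "cadj j (l j g) u v = adj g u v" unfolding cadj_def by (simp add: adj_l)
  then show "(u,v) \<in> cap j (l j g) \<longleftrightarrow> (u,v) \<in> g" using ordd_mem[OF assms] unfolding mem_cap by auto
qed

lemma T2a:
  assumes "ordd g" shows "cap (Suc j) (l j g) = g"
proof (intro set_eqI, clarify)
  fix u v
  have "u < v \<Longrightarrow> cadj (Suc j) (l j g) u v = adj g u v" unfolding cadj_def adj_l
    by (auto simp: su_def sd_def; metis adj_sym less_antisym)
  then show "(u,v) \<in> cap (Suc j) (l j g) \<longleftrightarrow> (u,v) \<in> g" using ordd_mem[OF assms] unfolding mem_cap by auto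
qed

lemma T2b:
  assumes "ordd g" shows "cap j (l (Suc j) g) = g"
proof (intro set_eqI, clarify)
  fix u v
  have "u < v \<Longrightarrow> cadj j (l (Suc j) g) u v = adj g u v" unfolding cadj_def adj_l
    by (auto simp: su_def sd_def; metis adj_sym less_antisym)
  then show "(u,v) \<in> cap j (l (Suc j) g) \<longleftrightarrow> (u,v) \<in> g" using ordd_mem[OF assms] unfolding mem_cap by auto
qed

lemma comm3: "j \<le> k \<Longrightarrow> u \<notin> {j, Suc j} \<Longrightarrow> sd j (su (k+2) u) = su k (sd j u) \<and> su (k+2) u \<notin> {j, Suc j}"
  by (auto simp: su_def sd_def)
lemma comm3J: "j \<le> k \<Longrightarrow> (su (k+2) u \<in> {j, Suc j}) = (u \<in> {j, Suc j})"
  by (auto simp: su_def)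
lemma comm3J': "j \<le> k \<Longrightarrow> u \<in> {j, Suc j} \<Longrightarrow> su (k+2) u = u"
  by (auto simp: su_def)

lemma cadj3:
  assumes jk: "j \<le> k"
  shows "cadj (k+2) (l j g) u v \<longleftrightarrow> (u = j \<and> v = Suc j) \<or> (u = Suc j \<and> v = j) \<or>
     (u \<notin> {j, Suc j} \<and> v \<notin> {j, Suc j} \<and> cadj k g (sd j u) (sd j v))"
proof (cases "u \<in> {j, Suc j}")
  case True
  note uu = comm3J'[OF jk True]
  show ?thesis
  proof (cases "v \<in> {j, Suc j}")
    case True
    note vv = comm3J'[OF jk True]
    have "k + 2 \<notin> {j, Suc j}" "Suc (k+2) \<notin> {j, Suc j}" using jk by auto
    then show ?thesis using \<open>u \<in> {j, Suc j}\<close> True uu vv unfolding cadj_def adj_l by auto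
  next
    case False
    then have "su (k+2) v \<notin> {j, Suc j}" using comm3J[OF jk] by blast
    moreover have "k + 2 \<notin> {j, Suc j}" "Suc (k+2) \<notin> {j, Suc j}" using jk by auto
    ultimately show ?thesis using True False uu unfolding cadj_def adj_l by auto
  qed
next
  case False
  note cu = comm3[OF jk False]
  show ?thesis
  proof (cases "v \<in> {j, Suc j}")
    case True
    note vv = comm3J'[OF jk True]
    have "k + 2 \<notin> {j, Suc j}" "Suc (k+2) \<notin> {j, Suc j}" using jk by auto
    then show ?thesis using True False cu vv unfolding cadj_def adj_l by auto
  next
    case True2: False
    note cv = comm3[OF jk True2]
    have e: "sd j (k+2) = k" "sd j (Suc (k+2)) = Suc k" using jk by (auto simp: sd_def)
    have "k + 2 \<notin> {j, Suc j}" "Suc (k+2) \<notin> {j, Suc j}" using jk by auto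
    then show ?thesis using True2 False cu cv e unfolding cadj_def adj_l by auto
  qed
qed

lemma T3:
  assumes jk: "j \<le> k" shows "cap (k+2) (l j g) = l j (cap k g)"
proof (intro set_eqI, clarify)
  fix u v
  show "(u,v) \<in> cap (k+2) (l j g) \<longleftrightarrow> (u,v) \<in> l j (cap k g)"
    unfolding mem_cap mem_l cadj3[OF jk] using sd_less[of u j v] by auto
qed

lemma comm4: "i \<le> j \<Longrightarrow> u \<notin> {j, Suc j} \<Longrightarrow> sd (j+2) (su i u) = su i (sd j u) \<and> su i u \<notin> {j+2, Suc (j+2)}"
  by (auto simp: su_def sd_def)
lemma comm4J': "i \<le> j \<Longrightarrow> su i j = j + 2 \<and> su i (Suc j) = Suc (j+2)"
  by (auto simp: su_def)

lemma cadj4: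
  assumes ij: "i \<le> j"
  shows "cadj i (l (j+2) g) u v \<longleftrightarrow> (u = j \<and> v = Suc j) \<or> (u = Suc j \<and> v = j) \<or>
     (u \<notin> {j, Suc j} \<and> v \<notin> {j, Suc j} \<and> cadj i g (sd j u) (sd j v))"
proof -
  note JJ = comm4J'[OF ij]
  have iJ: "i \<notin> {j+2, Suc (j+2)}" "Suc i \<notin> {j+2, Suc (j+2)}" using ij by auto
  have si: "sd (j+2) i = i" "sd (j+2) (Suc i) = Suc i" using ij by (auto simp: sd_def)
  show ?thesis
  proof (cases "u \<in> {j, Suc j}")
    case True
    show ?thesis
    proof (cases "v \<in> {j, Suc j}")
      case True
      then show ?thesis using \<open>u \<in> {j, Suc j}\<close> JJ iJ unfolding cadj_def adj_l by auto
    next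
      case False
      note cv = comm4[OF ij False]
      show ?thesis using True False JJ iJ cv unfolding cadj_def adj_l by auto
    qed
  next
    case False
    note cu = comm4[OF ij False]
    show ?thesis
    proof (cases "v \<in> {j, Suc j}")
      case True
      then show ?thesis using False JJ iJ cu unfolding cadj_def adj_l by auto
    next
      case F2: False
      note cv = comm4[OF ij F2]
      show ?thesis using False F2 iJ cu cv si unfolding cadj_def adj_l by auto
    qed
  qed
qed

lemma T4:
  assumes ij: "i \<le> j" shows "cap i (l (j+2) g) = l j (cap i g)"
proof (intro set_eqI, clarify)
  fix u v
  show "(u,v) \<in> cap i (l (j+2) g) \<longleftrightarrow> (u,v) \<in> l j (cap i g)"
    unfolding mem_cap mem_l cadj4[OF ij] using sd_less[of u j v] by auto
qed

lemma T1m: "(j, Suc j) \<in> l j g" by (simp add: mem_l)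
lemma T2am: "(Suc j, Suc (Suc j)) \<notin> l j g" by (simp add: mem_l)
lemma T2bm: "(j, Suc j) \<notin> l (Suc j) g" by (simp add: mem_l)

fun Pq :: "nat \<Rightarrow> rat poly" where
  "Pq 0 = 1"
| "Pq (Suc 0) = [:0, 1:]"
| "Pq (Suc (Suc k)) = [:0, 1:] * Pq (Suc k) - Pq k"

lemma Delta_Pq: "Delta k = Fract (Pq k) 1"
  by (induction k rule: Pq.induct) (simp_all add: qq_def One_fract_def)

lemma Pq_coeff: "coeff (Pq k) k = 1 \<and> (\<forall>i>k. coeff (Pq k) i = 0)"
proof (induction k rule: Pq.induct)
  case 1 then show ?case by simp
next
  case 2 then show ?case by (simp add: coeff_pCons split: nat.splits)
next
  case (3 k)
  have e: "[:0, 1:] * p = pCons 0 p" for p :: "rat poly" by (simp add: pCons_eq_iff)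
  show ?case
  proof (intro conjI allI impI)
    show "coeff (Pq (Suc (Suc k))) (Suc (Suc k)) = 1" using 3 by (simp add: e)
    fix i assume "i > Suc (Suc k)"
    then obtain i' where "i = Suc i'" "i' > Suc k" by (cases i) auto
    then show "coeff (Pq (Suc (Suc k))) i = 0" using 3 by (simp add: e)
  qed
qed

lemma Delta_nz: "Delta k \<noteq> 0"
proof -
  have "Pq k \<noteq> 0" using Pq_coeff[of k] by auto
  then show ?thesis by (simp add: Delta_Pq Zero_fract_def eq_fract)
qed

definition Fm :: "nat \<Rightarrow> vec \<Rightarrow> diagram \<Rightarrow> K" where
  "Fm m v b = (\<Sum>a\<in>D m. v a * qq ^ loops m a b)"

lemma markov_F: "markov m v w = (\<Sum>b\<in>D m. w b * Fm m v b)"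
proof -
  have "markov m v w = (\<Sum>b\<in>D m. \<Sum>a\<in>D m. v a * w b * qq ^ loops m a b)"
    unfolding markov_def by (rule sum.swap)
  also have "\<dots> = (\<Sum>b\<in>D m. w b * Fm m v b)"
    unfolding Fm_def by (simp add: sum_distrib_left mult_ac)
  finally show ?thesis .
qed

lemma markov_sym: "markov m v w = markov m w v"
proof -
  have "markov m v w = (\<Sum>b\<in>D m. \<Sum>a\<in>D m. v a * w b * qq ^ loops m a b)"
    unfolding markov_def by (rule sum.swap)
  also have "\<dots> = markov m w v" unfolding markov_def by (simp add: loops_sym mult_ac)
  finally show ?thesis .
qed

lemma linl_pair:
  assumes j: "1 \<le> j" "j \<le> 2*m+1"
  shows "(\<Sum>b\<in>D (Suc m). lin_l m j x b * G b) = (\<Sum>c\<in>D m. x c * G (l j c))"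
proof -
  have "(\<Sum>b\<in>D (Suc m). lin_l m j x b * G b) = (\<Sum>b\<in>D (Suc m). \<Sum>c\<in>D m. if l j c = b then x c * G b else 0)"
    unfolding lin_l_def sum_distrib_right by (intro sum.cong refl) auto
  also have "\<dots> = (\<Sum>c\<in>D m. \<Sum>b\<in>D (Suc m). if l j c = b then x c * G b else 0)"
    by (rule sum.swap)
  also have "\<dots> = (\<Sum>c\<in>D m. x c * G (l j c))"
    using l_D[OF _ j] by (simp add: finite_D)
  finally show ?thesis .
qed

lemma F_l:
  assumes j: "1 \<le> j" "j \<le> 2*m+1" and b: "b \<in> M (Suc m)"
  shows "Fm (Suc m) (lin_l m j x) b = (if (j, Suc j) \<in> b then qq else 1) * Fm m x (cap j b)"
proof -
  have "Fm (Suc m) (lin_l m j x) b = (\<Sum>c\<in>D m. x c * qq ^ loops (Suc m) (l j c) b)"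
    unfolding Fm_def by (rule linl_pair[OF j])
  also have "\<dots> = (\<Sum>c\<in>D m. (if (j, Suc j) \<in> b then qq else 1) * (x c * qq ^ loops m c (cap j b)))"
  proof (rule sum.cong[OF refl])
    fix c assume "c \<in> D m"
    then have "c \<in> M m" by (rule D_M)
    then show "x c * qq ^ loops (Suc m) (l j c) b = (if (j, Suc j) \<in> b then qq else 1) * (x c * qq ^ loops m c (cap j b))"
      using loops_l[OF _ b j] by (simp add: power_add)
  qed
  also have "\<dots> = (if (j, Suc j) \<in> b then qq else 1) * Fm m x (cap j b)"
    unfolding Fm_def by (simp add: sum_distrib_left)
  finally show ?thesis .
qed

lemma F_lin: "Fm m (\<lambda>b. v b - c * w b) g = Fm m v g - c * Fm m w g"
  unfolding Fm_def by (simp add: algebra_simps sum_subtractf sum_distrib_left)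

lemma ep_cons2: "as \<noteq> [] \<Longrightarrow> 2 \<le> a \<Longrightarrow> ep (a # as) =
   (\<lambda>b. lin_l (length as) a (ep as) b - (Delta (a - 2) / Delta (a - 1)) * ep ((a - 1) # as) b)"
  by simp
lemma ep_cons1: "as \<noteq> [] \<Longrightarrow> a \<le> 1 \<Longrightarrow> ep (a # as) = lin_l (length as) 1 (ep as)"
  by simp

definition supp :: "nat \<Rightarrow> vec \<Rightarrow> bool" where "supp m v = (\<forall>b. b \<notin> D m \<longrightarrow> v b = 0)"

lemma supp_lin_l: assumes "1 \<le> j" "j \<le> 2*m+1" shows "supp (Suc m) (lin_l m j x)"
  unfolding supp_def lin_l_def using l_D[OF _ assms] by (auto intro!: sum.neutral)

lemma supp_ep_c:
  assumes ne: "as \<noteq> []" and s: "supp (length as) (ep as)"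
  shows "1 \<le> c \<Longrightarrow> c \<le> 2 * length as + 1 \<Longrightarrow> supp (Suc (length as)) (ep (c # as))"
proof (induction c)
  case 0 then show ?case by simp
next
  case (Suc c)
  show ?case
  proof (cases "c = 0")
    case True then show ?thesis using ne supp_lin_l[of 1 "length as"] by simp
  next
    case False
    then have "supp (Suc (length as)) (ep (c # as))" using Suc by simp
    moreover have "supp (Suc (length as)) (lin_l (length as) (Suc c) (ep as))"
      using supp_lin_l Suc.prems by blast
    ultimately show ?thesis using ne False unfolding supp_def by simp
  qed
qed

declare ep.simps[simp del]

lemma M_ordd: "g \<in> M m \<Longrightarrow> ordd g"
  unfolding M_def mt_def ordd_def by auto

lemma Adj0:
  assumes g: "g \<in> M m" and j: "1 \<le> j" "j \<le> 2*m+1"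
  shows "Fm (Suc m) (lin_l m j e) (l j g) = qq * Fm m e g"
  using F_l[OF j l_M[OF g j]] T1m T1[OF M_ordd[OF g]] by simp

lemma AdjR:
  assumes g: "g \<in> M m" and j: "1 \<le> j" "Suc j \<le> 2*m+1"
  shows "Fm (Suc m) (lin_l m (Suc j) e) (l j g) = Fm m e g"
proof -
  have "l j g \<in> M (Suc m)" using l_M[OF g] j by simp
  then show ?thesis using F_l[of "Suc j" m] j T2am T2a[OF M_ordd[OF g]] by simp
qed

lemma AdjL:
  assumes g: "g \<in> M m" and j: "1 \<le> j" "Suc j \<le> 2*m+1"
  shows "Fm (Suc m) (lin_l m j e) (l (Suc j) g) = Fm m e g"
proof -
  have "l (Suc j) g \<in> M (Suc m)" using l_M[OF g] j by simp
  then show ?thesis using F_l[of j m] j T2bm T2b[OF M_ordd[OF g]] by simp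
qed

lemma FarR:
  assumes g: "g \<in> M m" and j: "1 \<le> j" "j \<le> k" "k+2 \<le> 2*m+1"
  shows "Fm (Suc m) (lin_l m (k+2) e) (l j g) = (if (k+2, Suc (k+2)) \<in> l j g then qq else 1) * Fm m e (l j (cap k g))"
proof -
  have "l j g \<in> M (Suc m)" using l_M[OF g] j by simp
  then show ?thesis using F_l[of "k+2" m] j T3[of j k] by simp
qed

lemma FarL:
  assumes g: "g \<in> M m" and i: "1 \<le> i" "i \<le> j" "j+2 \<le> 2*m+1"
  shows "Fm (Suc m) (lin_l m i e) (l (j+2) g) = (if (i, Suc i) \<in> l (j+2) g then qq else 1) * Fm m e (l j (cap i g))"
proof -
  have "l (j+2) g \<in> M (Suc m)" using l_M[OF g] i by simp
  then show ?thesis using F_l[of i m] i T4[of i j] by simp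
qed

fun R :: "nat list \<Rightarrow> bool" where
  "R [] = False"
| "R [a] = (a = 1)"
| "R (a # b # t) = (1 \<le> a \<and> a \<le> Suc b \<and> R (b # t))"

lemma R_hd: "R t \<Longrightarrow> 1 \<le> hd t \<and> hd t \<le> length t"
  by (induction t rule: R.induct) auto

definition PP :: "nat list \<Rightarrow> bool" where
  "PP t = (\<forall>g\<in>M (length t - 1). \<forall>j. 1 \<le> j \<longrightarrow> j < hd t \<longrightarrow> Fm (length t) (ep t) (l j g) = 0)"

definition r :: "nat \<Rightarrow> K" where "r b = Delta (b - 2) / Delta (b - 1)"

definition Gf :: "nat list \<Rightarrow> nat \<Rightarrow> nat \<Rightarrow> diagram \<Rightarrow> K" where "Gf tau m b x = Fm (Suc m) (ep (b # tau)) x"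

context
  fixes tau :: "nat list" and m t :: nat
  assumes ne: "tau \<noteq> []" and mdef: "m = length tau" and tdef: "t = hd tau"
    and t1: "1 \<le> t" and tm: "t \<le> m" and P: "PP tau"
begin

abbreviation G :: "nat \<Rightarrow> diagram \<Rightarrow> K" where "G \<equiv> Gf tau m"
lemma G_def: "G b x = Fm (Suc m) (ep (b # tau)) x" by (simp add: Gf_def)

lemma m1: "1 \<le> m" using tm t1 by simp

lemma G_rec: assumes "2 \<le> b" shows "G b x = Fm (Suc m) (lin_l m b (ep tau)) x - r b * G (b - 1) x"
  unfolding G_def ep_cons2[OF ne assms] mdef[symmetric] r_def[symmetric] by (rule F_lin)

lemma G_1: "G (Suc 0) x = Fm (Suc m) (lin_l m 1 (ep tau)) x"
  using ep_cons1[OF ne, of "Suc 0"] by (simp add: G_def mdef[symmetric])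

lemma Pt: "g \<in> M (m - 1) \<Longrightarrow> 1 \<le> j \<Longrightarrow> j < t \<Longrightarrow> Fm m (ep tau) (l j g) = 0"
  using P unfolding PP_def mdef tdef by blast

lemma capM: "g \<in> M m \<Longrightarrow> 1 \<le> k \<Longrightarrow> k \<le> 2*m - 1 \<Longrightarrow> cap k g \<in> M (m - 1)"
  using cap_M[of g "m - 1" k] m1 by simp

lemma Z: "1 \<le> b \<Longrightarrow> b + 2 \<le> j \<Longrightarrow> j \<le> t + 1 \<Longrightarrow> g \<in> M m \<Longrightarrow> G b (l j g) = 0"
proof (induction b arbitrary: j g)
  case 0 then show ?case by simp
next
  case (Suc b)
  define j' where "j' = j - 2"
  have j': "j = j' + 2" using Suc.prems(2) j'_def by simp
  have far: "Fm (Suc m) (lin_l m (Suc b) (ep tau)) (l j g) = 0"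
  proof -
    have "Fm (Suc m) (lin_l m (Suc b) (ep tau)) (l (j'+2) g) = (if (Suc b, Suc (Suc b)) \<in> l (j'+2) g then qq else 1) * Fm m (ep tau) (l j' (cap (Suc b) g))"
      using FarL[OF Suc.prems(4), of "Suc b" j'] Suc.prems j' tm by simp
    moreover have "Fm m (ep tau) (l j' (cap (Suc b) g)) = 0"
      using Pt[OF capM[OF Suc.prems(4)]] Suc.prems j' tm by simp
    ultimately show ?thesis using j' by simp
  qed
  show ?case
  proof (cases "b = 0")
    case True then show ?thesis using G_1 far by simp
  next
    case False
    then have "G b (l j g) = 0" using Suc by simp
    then show ?thesis using G_rec[of "Suc b"] far False by simp
  qed
qed

lemma N1: "1 \<le> b \<Longrightarrow> b \<le> t \<Longrightarrow> g \<in> M m \<Longrightarrow> G b (l (Suc b) g) = Fm m (ep tau) g"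
proof -
  assume b: "1 \<le> b" "b \<le> t" and g: "g \<in> M m"
  have a: "Fm (Suc m) (lin_l m b (ep tau)) (l (Suc b) g) = Fm m (ep tau) g"
    using AdjL[OF g] b tm by simp
  show ?thesis
  proof (cases "b = 1")
    case True then show ?thesis using G_1 a by simp
  next
    case False
    then have "G (b - 1) (l (Suc b) g) = 0" using Z[of "b - 1" "Suc b" g] b g by simp
    then show ?thesis using G_rec[of b] a b False by simp
  qed
qed

lemma N: "1 \<le> a \<Longrightarrow> a \<le> t + 1 \<Longrightarrow> g \<in> M m \<Longrightarrow> G a (l a g) = Delta a / Delta (a - 1) * Fm m (ep tau) g"
proof -
  assume a: "1 \<le> a" "a \<le> t + 1" and g: "g \<in> M m"
  have q: "Fm (Suc m) (lin_l m a (ep tau)) (l a g) = qq * Fm m (ep tau) g"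
    using Adj0[OF g] a tm by simp
  show ?thesis
  proof (cases "a = 1")
    case True then show ?thesis using G_1 q by simp
  next
    case False
    define k where "k = a - 2"
    have k: "a = Suc (Suc k)" using a False k_def by simp
    have e1: "G a (l a g) = Fm (Suc m) (lin_l m a (ep tau)) (l a g) - r a * G (a - 1) (l a g)"
      by (rule G_rec) (simp add: k)
    have e2: "G (a - 1) (l a g) = Fm m (ep tau) g" using N1[of "a - 1" g] a g False by simp
    have "G a (l a g) = qq * Fm m (ep tau) g - r a * Fm m (ep tau) g" using e1 e2 q by simp
    then have "G a (l a g) = (qq - r a) * Fm m (ep tau) g" by (simp add: algebra_simps)
    also have "qq - r a = Delta a / Delta (a - 1)"
      unfolding r_def k using Delta_nz[of "Suc k"] by (simp add: field_simps)
    finally show ?thesis .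
  qed
qed

lemma Pstep: "1 \<le> j \<Longrightarrow> j < a \<Longrightarrow> a \<le> t + 1 \<Longrightarrow> g \<in> M m \<Longrightarrow> G a (l j g) = 0"
proof (induction a arbitrary: j)
  case 0 then show ?case by simp
next
  case (Suc a)
  have a1: "1 \<le> a" using Suc.prems by simp
  have sa: "2 \<le> Suc a" using a1 by simp
  show ?case
  proof (cases "j = a")
    case True
    have x: "Fm (Suc m) (lin_l m (Suc a) (ep tau)) (l a g) = Fm m (ep tau) g"
      using AdjR[OF Suc.prems(4), of a] a1 Suc.prems tm True by simp
    have y: "G a (l a g) = Delta a / Delta (a - 1) * Fm m (ep tau) g"
      using N[OF a1 _ Suc.prems(4)] Suc.prems by simp
    have ee: "Suc a - 2 = a - 1" "Suc a - 1 = a" using a1 by auto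
    have one: "r (Suc a) * (Delta a / Delta (a - 1)) = 1"
      unfolding r_def ee using Delta_nz[of a] Delta_nz[of "a - 1"] by simp
    have e: "G (Suc a) (l a g) = Fm (Suc m) (lin_l m (Suc a) (ep tau)) (l a g) - r (Suc a) * G a (l a g)"
      using G_rec[OF sa, of "l a g"] by simp
    also have "\<dots> = Fm m (ep tau) g - (r (Suc a) * (Delta a / Delta (a - 1))) * Fm m (ep tau) g"
      using x y by (simp add: mult.assoc)
    also have "\<dots> = 0" unfolding one by simp
    finally show ?thesis using True by simp
  next
    case False
    then have ja: "j < a" using Suc.prems by simp
    then have IH: "G a (l j g) = 0" using Suc.IH Suc.prems by simp
    define k where "k = a - 1"
    have k: "Suc a = k + 2" "j \<le> k" using ja a1 k_def by auto
    have "Fm (Suc m) (lin_l m (k+2) (ep tau)) (l j g) = (if (k+2, Suc (k+2)) \<in> l j g then qq else 1) * Fm m (ep tau) (l j (cap k g))"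
      using FarR[OF Suc.prems(4), of j k] Suc.prems k tm by simp
    moreover have "Fm m (ep tau) (l j (cap k g)) = 0"
      using Pt[OF capM[OF Suc.prems(4)]] Suc.prems k tm by simp
    ultimately have "Fm (Suc m) (lin_l m (Suc a) (ep tau)) (l j g) = 0" using k by simp
    then show ?thesis using G_rec[OF sa] IH by simp
  qed
qed

lemma Hsum:
  assumes sne: "sig \<noteq> []" and sl: "length sig = m" and a: "1 \<le> a" "a \<le> t + 1"
  shows "1 \<le> b \<Longrightarrow> b \<le> a \<Longrightarrow> (\<Sum>x\<in>D (Suc m). ep (b # sig) x * G a x) =
     (if b = a then Delta a / Delta (a - 1) * markov m (ep tau) (ep sig) else 0)"
proof (induction b)
  case 0 then show ?case by simp
next
  case (Suc b)
  have bnd: "1 \<le> Suc b" "Suc b \<le> 2*m+1" using Suc.prems a tm by auto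
  have S: "(\<Sum>x\<in>D (Suc m). lin_l m (Suc b) (ep sig) x * G a x) =
     (if Suc b = a then Delta a / Delta (a - 1) * markov m (ep tau) (ep sig) else 0)"
  proof -
    have e: "(\<Sum>x\<in>D (Suc m). lin_l m (Suc b) (ep sig) x * G a x) = (\<Sum>c\<in>D m. ep sig c * G a (l (Suc b) c))"
      by (rule linl_pair[OF bnd])
    show ?thesis
    proof (cases "Suc b = a")
      case True
      have "(\<Sum>c\<in>D m. ep sig c * G a (l (Suc b) c)) = (\<Sum>c\<in>D m. Delta a / Delta (a - 1) * (ep sig c * Fm m (ep tau) c))"
      proof (rule sum.cong[OF refl])
        fix c assume "c \<in> D m"
        then have "c \<in> M m" by (rule D_M)
        then show "ep sig c * G a (l (Suc b) c) = Delta a / Delta (a - 1) * (ep sig c * Fm m (ep tau) c)"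
          using N[OF a] True by simp
      qed
      also have "\<dots> = Delta a / Delta (a - 1) * markov m (ep tau) (ep sig)"
        by (simp add: markov_F sum_distrib_left)
      finally show ?thesis using e True by simp
    next
      case False
      have "(\<Sum>c\<in>D m. ep sig c * G a (l (Suc b) c)) = 0"
      proof (rule sum.neutral, rule ballI)
        fix c assume "c \<in> D m"
        then have "c \<in> M m" by (rule D_M)
        then show "ep sig c * G a (l (Suc b) c) = 0" using Pstep[of "Suc b" a c] Suc.prems False a by simp
      qed
      then show ?thesis using e False by simp
    qed
  qed
  show ?case
  proof (cases "b = 0")
    case True
    then have "ep (Suc b # sig) = lin_l m (Suc b) (ep sig)" using ep_cons1[OF sne, of "Suc 0"] sl by simp
    then show ?thesis using S by simp
  next
    case False
    have IH: "(\<Sum>x\<in>D (Suc m). ep (b # sig) x * G a x) = 0" using Suc False by simp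
    have "ep (Suc b # sig) = (\<lambda>x. lin_l m (Suc b) (ep sig) x - r (Suc b) * ep (b # sig) x)"
      using ep_cons2[OF sne, of "Suc b"] sl False unfolding r_def by simp
    then have "(\<Sum>x\<in>D (Suc m). ep (Suc b # sig) x * G a x) =
       (\<Sum>x\<in>D (Suc m). lin_l m (Suc b) (ep sig) x * G a x) - r (Suc b) * (\<Sum>x\<in>D (Suc m). ep (b # sig) x * G a x)"
      by (simp add: algebra_simps sum_subtractf sum_distrib_left)
    then show ?thesis using S IH by simp
  qed
qed

end

lemma D0: "{} \<in> D 0" by (simp add: D_def)
lemma D0_eq: "D 0 = {{}}" by (auto simp: D_def)

lemma l1e: "l 1 {} = {(1,2)}" by (simp add: l_def)
lemma X1: "{(1,2)} \<in> D 1" using l_D[OF D0, of 1] l1e by simp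

lemma supp_delta: "x \<in> D m \<Longrightarrow> supp m (delta x)" unfolding supp_def delta_def by auto

lemma main_PP: "R tau \<Longrightarrow> PP tau \<and> supp (length tau) (ep tau)"
proof (induction tau rule: R.induct)
  case 1 then show ?case by simp
next
  case (2 a)
  have "ep [a] = delta {(1,2)}" by (simp add: ep.simps)
  then show ?case using X1 supp_delta unfolding PP_def using 2 by simp
next
  case (3 a b t)
  define tau where "tau = b # t"
  define m where "m = length tau"
  have Rt: "R tau" and a: "1 \<le> a" "a \<le> Suc b" using 3 tau_def by auto
  then have IH: "PP tau" "supp m (ep tau)" using 3 tau_def m_def by auto
  have hb: "1 \<le> b" "b \<le> m" using R_hd[OF Rt] tau_def m_def by auto
  have ne: "tau \<noteq> []" using tau_def by simp
  have "PP (a # tau)"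
    unfolding PP_def
  proof (intro ballI allI impI)
    fix g j assume g: "g \<in> M (length (a # tau) - 1)" and j: "1 \<le> j" "j < hd (a # tau)"
    have "Gf tau m a (l j g) = 0"
      using Pstep[OF ne m_def _ hb IH(1), of j a g] tau_def g j a m_def by simp
    then show "Fm (length (a # tau)) (ep (a # tau)) (l j g) = 0" using m_def by (simp add: Gf_def)
  qed
  moreover have "supp (length (a # tau)) (ep (a # tau))"
    using supp_ep_c[OF ne, of a] IH(2) a hb m_def by simp
  ultimately show ?case using tau_def by simp
qed

lemma loops11: "loops 1 {(1,2)} {(1,2)} = 1"
proof -
  let ?E = "(({(1::nat,2::nat)} \<union> {(1,2)}) \<union> ({(1,2)} \<union> {(1,2)})\<inverse>)\<^sup>*"
  have e12: "(1::nat, 2::nat) \<in> ?E" by auto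
  have "?E``{2} = ?E``{1}"
    using eq_equiv_class_iff[OF equiv_rt UNIV_I UNIV_I] equiv_rt e12 by (metis E_sym symE symD)
  moreover have "{1..2*1::nat} = {1,2}" by auto
  ultimately have "{1..2*1} // ?E = {?E``{1}}" unfolding quotient_image by auto
  then show ?thesis unfolding loops_def by simp
qed

lemma markov_delta: "x \<in> D m \<Longrightarrow> markov m (delta x) (delta x) = qq ^ loops m x x"
proof -
  assume x: "x \<in> D m"
  have "markov m (delta x) (delta x) = (\<Sum>a\<in>D m. if a = x then (\<Sum>b\<in>D m. if b = x then qq ^ loops m a b else 0) else 0)"
    unfolding markov_def delta_def by (intro sum.cong refl) (auto intro!: sum.cong)
  also have "\<dots> = (\<Sum>a\<in>D m. if a = x then qq ^ loops m a x else 0)"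
    by (intro sum.cong refl) (simp add: sum.delta[OF finite_D] x)
  also have "\<dots> = qq ^ loops m x x" by (simp add: sum.delta[OF finite_D] x)
  finally show ?thesis .
qed

lemma orth: "R al \<Longrightarrow> R be \<Longrightarrow> length be = length al \<Longrightarrow>
   markov (length al) (ep al) (ep be) = (if al = be then (\<Prod>a\<leftarrow>al. Delta a / Delta (a - 1)) else 0)"
proof (induction al arbitrary: be rule: R.induct)
  case 1 then show ?case by simp
next
  case (2 a)
  then obtain c where "be = [c]" by (cases be) auto
  then have "be = [1]" "a = 1" using 2 by auto
  moreover have "ep [1] = delta {(1,2)}" by (simp add: ep.simps)
  ultimately show ?case using markov_delta[OF X1] loops11 by simp
next
  case (3 a b t)
  define tau where "tau = b # t"
  define m where "m = length tau"
  have Rt: "R tau" and a: "1 \<le> a" "a \<le> Suc b" using 3 tau_def by auto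
  have IH: "\<And>s. R s \<Longrightarrow> length s = m \<Longrightarrow> markov m (ep tau) (ep s) = (if tau = s then (\<Prod>a\<leftarrow>tau. Delta a / Delta (a - 1)) else 0)"
    using 3 tau_def m_def by auto
  have Pt: "PP tau" using main_PP[OF Rt] by simp
  have hb: "1 \<le> b" "b \<le> m" using R_hd[OF Rt] tau_def m_def by auto
  have ne: "tau \<noteq> []" using tau_def by simp
  obtain c sig where be: "be = c # sig" using 3 by (cases be) auto
  have sne: "sig \<noteq> []" using 3 be tau_def by auto
  then obtain d s where sig: "sig = d # s" by (cases sig) auto
  have Rs: "R sig" and c: "1 \<le> c" "c \<le> Suc d" using 3 be sig by auto
  have sl: "length sig = m" using 3 be tau_def m_def by simp
  have Ps: "PP sig" using main_PP[OF Rs] by simp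
  have hd: "1 \<le> d" "d \<le> m" using R_hd[OF Rs] sig sl by auto
  have lal: "length (a # tau) = Suc m" using m_def by simp
  show ?case
  proof (cases "c \<le> a")
    case True
    have "markov (Suc m) (ep (a # tau)) (ep (c # sig)) = (\<Sum>x\<in>D (Suc m). ep (c # sig) x * Gf tau m a x)"
      by (simp add: markov_F Gf_def)
    also have "\<dots> = (if c = a then Delta a / Delta (a - 1) * markov m (ep tau) (ep sig) else 0)"
      using Hsum[OF ne m_def _ hb Pt sne sl, of a c] a c True tau_def by simp
    also have "\<dots> = (if a # tau = c # sig then (\<Prod>a\<leftarrow>a # tau. Delta a / Delta (a - 1)) else 0)"
      using IH[OF Rs sl] by auto
    finally show ?thesis using be tau_def lal by simp
  next
    case False
    have "markov (Suc m) (ep (a # tau)) (ep (c # sig)) = markov (Suc m) (ep (c # sig)) (ep (a # tau))"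
      by (rule markov_sym)
    also have "\<dots> = (\<Sum>x\<in>D (Suc m). ep (a # tau) x * Gf sig m c x)"
      by (simp add: markov_F Gf_def)
    also have "\<dots> = 0"
      using Hsum[OF sne sl[symmetric] _ hd Ps ne m_def[symmetric], of c a] a c False sig by simp
    finally show ?thesis using be tau_def lal False by auto
  qed
qed

lemma innermost:
  assumes d: "de \<in> D (Suc n)"
  shows "\<exists>k. (k, Suc k) \<in> de"
proof -
  have mt: "mt {1..2*Suc n} de" and ncd: "nc de" using d D_eq by auto
  note U = mt_adj_unique[OF mt]
  have ord: "\<And>x y. (x,y) \<in> de \<Longrightarrow> x < y" using mt unfolding mt_def by auto
  have rng: "\<And>x y. (x,y) \<in> de \<Longrightarrow> x \<in> {1..2*Suc n} \<and> y \<in> {1..2*Suc n}" using mt unfolding mt_def by auto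
  have ncr: "\<And>a b c e. (a,b) \<in> de \<Longrightarrow> (c,e) \<in> de \<Longrightarrow> \<not> (a < c \<and> c < b \<and> b < e)"
    using ncd unfolding nc_def by blast
  have main: "\<And>a b. (a,b) \<in> de \<Longrightarrow> b - a = dd \<Longrightarrow> \<exists>k. (k, Suc k) \<in> de" for dd
  proof (induction dd rule: less_induct)
    case (less dd a b)
    have ab: "a < b" using ord less.prems(1) by blast
    show ?case
    proof (cases "b = Suc a")
      case True then show ?thesis using less.prems(1) by blast
    next
      case False
      then have sab: "Suc a < b" using ab by simp
      have "Suc a \<in> {1..2*Suc n}" using rng[OF less.prems(1)] sab by auto
      then obtain c where c: "adj de (Suc a) c" using mt_adj_ex[OF mt] by blast
      have aab: "adj de a b" using less.prems(1) adj_def by auto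
      have ca: "c \<noteq> a"
      proof
        assume "c = a"
        then have h: "adj de a (Suc a)" using c adj_sym by metis
        show False using U[OF h aab] sab by simp
      qed
      show ?thesis
      proof (cases "(Suc a, c) \<in> de")
        case True
        have "\<not> b < c" using ncr[OF less.prems(1) True] ab sab by auto
        moreover have "c \<noteq> b"
        proof
          assume "c = b"
          then have "adj de b (Suc a)" "adj de b a" using c aab adj_sym by metis+
          from U[OF this] show False by simp
        qed
        ultimately have "c < b" by simp
        moreover have "Suc a < c" using ord True by blast
        ultimately have "c - Suc a < dd" using less.prems(2) by simp
        then show ?thesis using less.IH True by blast
      next
        case False
        then have cs: "(c, Suc a) \<in> de" using c adj_def by auto
        then have "c < Suc a" using ord by blast
        then have "c < a" using ca by simp
        then show ?thesis using ncr[OF cs less.prems(1)] sab by simp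
      qed
    qed
  qed
  have "(1::nat) \<in> {1..2*Suc n}" by simp
  then obtain v where "adj de 1 v" using mt_adj_ex[OF mt] by blast
  then obtain a b where "(a,b) \<in> de" unfolding adj_def by blast
  then show ?thesis using main by blast
qed

lemma kmin_in: "de \<in> D (Suc n) \<Longrightarrow> (kmin de, Suc (kmin de)) \<in> de"
  unfolding kmin_def using innermost by (rule LeastI_ex)

lemma kmin_le: "(k, Suc k) \<in> de \<Longrightarrow> kmin de \<le> k"
  unfolding kmin_def by (rule Least_le)

lemma arcJ:
  assumes mt: "mt S de" and k: "(k, Suc k) \<in> de" and uv: "(u,v) \<in> de" "(u,v) \<noteq> (k, Suc k)"
  shows "u \<notin> {k, Suc k} \<and> v \<notin> {k, Suc k}"
proof -
  note U = mt_adj_unique[OF mt]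
  have ord: "\<And>x y. (x,y) \<in> de \<Longrightarrow> x < y" using mt unfolding mt_def by auto
  have a1: "adj de k (Suc k)" "adj de (Suc k) k" using k adj_def by auto
  have a2: "adj de u v" "adj de v u" using uv adj_def by auto
  have "u \<noteq> k" using U[OF a1(1)] a2 uv by blast
  moreover have "u \<noteq> Suc k" using U[OF a1(2)] a2 uv ord[OF uv(1)] by fastforce
  moreover have "v \<noteq> k" using U[OF a1(1)] a2 uv ord[OF uv(1)] by fastforce
  moreover have "v \<noteq> Suc k" using U[OF a1(2)] a2 uv by blast
  ultimately show ?thesis by blast
qed

lemma mem_remove:
  assumes mt: "mt S de" and k: "(k, Suc k) \<in> de"
  shows "(u,v) \<in> remove_arc de k \<longleftrightarrow> (su k u, su k v) \<in> de"
proof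
  assume "(u,v) \<in> remove_arc de k"
  then obtain a b where ab: "(a,b) \<in> de" "(a,b) \<noteq> (k, Suc k)" "u = sd k a" "v = sd k b"
    unfolding remove_arc_def sd_def by auto
  then have "a \<notin> {k, Suc k}" "b \<notin> {k, Suc k}" using arcJ[OF mt k] by auto
  then show "(su k u, su k v) \<in> de" using ab by simp
next
  assume h: "(su k u, su k v) \<in> de"
  moreover have "(su k u, su k v) \<noteq> (k, Suc k)" by simp
  ultimately have "(su k u, su k v) \<in> de - {(k, Suc k)}" by simp
  then have "(sd k (su k u), sd k (su k v)) \<in> remove_arc de k"
    unfolding remove_arc_def sd_def by force
  then show "(u,v) \<in> remove_arc de k" by simp
qed

lemma remove_D:
  assumes d: "de \<in> D (Suc n)" and k: "(k, Suc k) \<in> de"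
  shows "remove_arc de k \<in> D n"
proof -
  have mt: "mt {1..2*Suc n} de" and ncd: "nc de" using d D_eq by auto
  note U = mt_adj_unique[OF mt]
  note A = mt_adjD[OF mt]
  have kr: "k \<in> {1..2*Suc n}" "Suc k \<in> {1..2*Suc n}" using mt k unfolding mt_def by auto
  have k1: "1 \<le> k" "k \<le> 2*n+1" using kr by auto
  have adjr: "adj (remove_arc de k) u v \<longleftrightarrow> adj de (su k u) (su k v)" for u v
    unfolding adj_def using mem_remove[OF mt k] by blast
  have "mt {1..2*n} (remove_arc de k)"
  proof (rule mt_intro)
    show "x < y" if "(x,y) \<in> remove_arc de k" for x y
      using that mem_remove[OF mt k] mt unfolding mt_def by fastforce
    show "u \<in> {1..2*n}" if "adj (remove_arc de k) u v" for u v
      using that adjr A su_range_rev k1 by blast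
    show "\<exists>v. adj (remove_arc de k) u v" if u: "u \<in> {1..2*n}" for u
    proof -
      have "su k u \<in> {1..2*Suc n}" using su_range[OF u k1] .
      then obtain w where w: "adj de (su k u) w" using mt_adj_ex[OF mt] by blast
      have a1: "adj de k (Suc k)" "adj de (Suc k) k" using k adj_def by auto
      have "w \<noteq> k"
      proof
        assume "w = k" then have "adj de k (su k u)" using w adj_sym by metis
        from U[OF this a1(1)] show False by simp
      qed
      moreover have "w \<noteq> Suc k"
      proof
        assume "w = Suc k" then have "adj de (Suc k) (su k u)" using w adj_sym by metis
        from U[OF this a1(2)] show False by simp
      qed
      ultimately have "su k (sd k w) = w" by simp
      then have "adj (remove_arc de k) u (sd k w)" using adjr w by simp
      then show ?thesis by blast
    qed
    show "v = w" if "adj (remove_arc de k) u v" "adj (remove_arc de k) u w" for u v w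
      using that adjr U su_inj by metis
  qed
  moreover have "nc (remove_arc de k)"
    unfolding nc_def
  proof (clarify)
    fix a b c e assume h: "(a,b) \<in> remove_arc de k" "(c,e) \<in> remove_arc de k" "a < c" "c < b" "b < e"
    then have "(su k a, su k b) \<in> de" "(su k c, su k e) \<in> de" using mem_remove[OF mt k] by auto
    moreover have "su k a < su k c" "su k c < su k b" "su k b < su k e" using h by auto
    ultimately show False using ncd unfolding nc_def by blast
  qed
  ultimately show ?thesis using D_eq by auto
qed

lemma l_remove:
  assumes d: "de \<in> D (Suc n)" and k: "(k, Suc k) \<in> de"
  shows "l k (remove_arc de k) = de"
proof (intro set_eqI, clarify)
  have mt: "mt {1..2*Suc n} de" using d D_eq by auto
  fix u v
  show "(u,v) \<in> l k (remove_arc de k) \<longleftrightarrow> (u,v) \<in> de"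
  proof (cases "(u,v) = (k, Suc k)")
    case True then show ?thesis using k mem_l by auto
  next
    case False
    have "(u,v) \<in> l k (remove_arc de k) \<longleftrightarrow> u \<notin> {k, Suc k} \<and> v \<notin> {k, Suc k} \<and> (u,v) \<in> de"
      unfolding mem_l mem_remove[OF mt k] using False by auto
    also have "\<dots> \<longleftrightarrow> (u,v) \<in> de" using arcJ[OF mt k _ False] by blast
    finally show ?thesis .
  qed
qed

lemma kmin_range: "de \<in> D (Suc n) \<Longrightarrow> 1 \<le> kmin de \<and> kmin de \<le> 2*n+1"
  using kmin_in[of de n] unfolding D_eq mt_def by auto

lemma rseq_len: "length (rseq n de) = n"
  by (induction n arbitrary: de) auto

lemma kmin_bound:
  assumes d: "de \<in> D (Suc (Suc n))"
  shows "kmin de \<le> Suc (kmin (remove_arc de (kmin de)))"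
proof (rule ccontr)
  let ?k = "kmin de" and ?d' = "remove_arc de (kmin de)"
  assume "\<not> ?thesis"
  then have lt: "Suc (kmin ?d') < ?k" by simp
  have d': "?d' \<in> D (Suc n)" using remove_D[OF d kmin_in[OF d]] .
  have "(kmin ?d', Suc (kmin ?d')) \<in> ?d'" using kmin_in[OF d'] .
  then have "(kmin ?d', Suc (kmin ?d')) \<in> l ?k ?d'" using lt by (simp add: mem_l sd_def)
  then have "(kmin ?d', Suc (kmin ?d')) \<in> de" using l_remove[OF d kmin_in[OF d]] by simp
  then have "?k \<le> kmin ?d'" by (rule kmin_le)
  then show False using lt by simp
qed

lemma RS_R: "de \<in> D (Suc n) \<Longrightarrow> R (rseq (Suc n) de)"
proof (induction n arbitrary: de)
  case 0
  have "kmin de = 1" using kmin_range[OF 0] by simp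
  then show ?case by simp
next
  case (Suc n)
  let ?d' = "remove_arc de (kmin de)"
  have d': "?d' \<in> D (Suc n)" using remove_D[OF Suc.prems kmin_in[OF Suc.prems]] .
  have "R (rseq (Suc n) ?d')" using Suc.IH[OF d'] .
  moreover have "rseq (Suc (Suc n)) de = kmin de # kmin ?d' # rseq n (remove_arc ?d' (kmin ?d'))" by simp
  moreover have "rseq (Suc n) ?d' = kmin ?d' # rseq n (remove_arc ?d' (kmin ?d'))" by simp
  moreover have "1 \<le> kmin de" using kmin_range[OF Suc.prems] by simp
  moreover have "kmin de \<le> Suc (kmin ?d')" using kmin_bound[OF Suc.prems] .
  ultimately show ?case by simp
qed

lemma rseq_inj: "inj_on (rseq n) (D n)"
proof (induction n)
  case 0 then show ?case by (simp add: D0_eq)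
next
  case (Suc n)
  show ?case
  proof (rule inj_onI)
    fix x y assume x: "x \<in> D (Suc n)" and y: "y \<in> D (Suc n)" and e: "rseq (Suc n) x = rseq (Suc n) y"
    then have k: "kmin x = kmin y" and r: "rseq n (remove_arc x (kmin x)) = rseq n (remove_arc y (kmin y))" by auto
    have "remove_arc x (kmin x) = remove_arc y (kmin y)"
      using inj_onD[OF Suc.IH r remove_D[OF x kmin_in[OF x]] remove_D[OF y kmin_in[OF y]]] .
    then have "l (kmin x) (remove_arc x (kmin x)) = l (kmin y) (remove_arc y (kmin y))" using k by simp
    then show "x = y" using l_remove[OF x kmin_in[OF x]] l_remove[OF y kmin_in[OF y]] by simp
  qed
qed

lemma RS_sub: "1 \<le> n \<Longrightarrow> al \<in> RS n \<Longrightarrow> R al \<and> length al = n"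
  unfolding RS_def using RS_R rseq_len by (cases n) auto

lemma card_RS: "card (RS n) = card (D n)"
  unfolding RS_def using card_image[OF rseq_inj] .

lemma finite_RS: "finite (RS n)"
  unfolding RS_def using finite_D by simp

lemma sum_app: "(sum f A) x = sum (\<lambda>i. f i x) A" for f :: "'i \<Rightarrow> 'a \<Rightarrow> 'b::comm_monoid_add"
proof (cases "finite A")
  case True then show ?thesis by (induction A rule: finite_induct) (auto simp: plus_fun_def zero_fun_def)
next
  case False then show ?thesis by (simp add: zero_fun_def)
qed

interpretation VS: vector_space "\<lambda>(c::K) (v::vec). (\<lambda>x. c * v x)"
  by unfold_locales (simp_all add: fun_eq_iff algebra_simps plus_fun_def)

context
  fixes n :: nat
  assumes n1: "1 \<le> n"
begin

lemma RSf: "al \<in> RS n \<Longrightarrow> R al \<and> length al = n" using RS_sub n1 by blast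

lemma supp_RS: "al \<in> RS n \<Longrightarrow> supp n (ep al)" using RSf main_PP by blast

lemma orthRS: "al \<in> RS n \<Longrightarrow> be \<in> RS n \<Longrightarrow>
   markov n (ep al) (ep be) = (if al = be then (\<Prod>a\<leftarrow>al. Delta a / Delta (a - 1)) else 0)"
  using orth RSf by metis

lemma norm_nz: "al \<in> RS n \<Longrightarrow> markov n (ep al) (ep al) \<noteq> 0"
proof -
  assume a: "al \<in> RS n"
  have "(\<Prod>a\<leftarrow>al. Delta a / Delta (a - 1)) \<noteq> 0"
    unfolding prod_list_zero_iff using Delta_nz by auto
  then show ?thesis using orthRS[OF a a] by simp
qed

lemma coef:
  assumes a0: "a0 \<in> RS n"
  shows "markov n (ep a0) (\<lambda>b. \<Sum>al\<in>RS n. c al * ep al b) = c a0 * markov n (ep a0) (ep a0)"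
proof -
  have "markov n (ep a0) (\<lambda>b. \<Sum>al\<in>RS n. c al * ep al b) = (\<Sum>b\<in>D n. (\<Sum>al\<in>RS n. c al * ep al b) * Fm n (ep a0) b)"
    by (simp add: markov_F)
  also have "\<dots> = (\<Sum>al\<in>RS n. c al * (\<Sum>b\<in>D n. ep al b * Fm n (ep a0) b))"
    by (simp add: sum_distrib_right sum_distrib_left mult_ac sum.swap[of _ "D n"])
  also have "\<dots> = (\<Sum>al\<in>RS n. c al * markov n (ep a0) (ep al))"
    by (simp add: markov_F)
  also have "\<dots> = (\<Sum>al\<in>RS n. if al = a0 then c a0 * markov n (ep a0) (ep a0) else 0)"
  proof (intro sum.cong refl)
    fix al assume al: "al \<in> RS n"
    show "c al * markov n (ep a0) (ep al) = (if al = a0 then c a0 * markov n (ep a0) (ep a0) else 0)"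
    proof (cases "al = a0")
      case True then show ?thesis by simp
    next
      case False then show ?thesis using orthRS[OF a0 al] by simp
    qed
  qed
  also have "\<dots> = c a0 * markov n (ep a0) (ep a0)" using a0 by (simp add: finite_RS)
  finally show ?thesis .
qed

lemma markov_zero: "markov n v (\<lambda>b. 0) = 0" by (simp add: markov_def)

lemma coef_unique:
  assumes a0: "a0 \<in> RS n" and e: "(\<lambda>b. \<Sum>al\<in>RS n. c al * ep al b) = (\<lambda>b. \<Sum>al\<in>RS n. d al * ep al b)"
  shows "c a0 = d a0"
proof -
  have "c a0 * markov n (ep a0) (ep a0) = markov n (ep a0) (\<lambda>b. \<Sum>al\<in>RS n. c al * ep al b)"
    using coef[OF a0, of c] by simp
  also have "\<dots> = markov n (ep a0) (\<lambda>b. \<Sum>al\<in>RS n. d al * ep al b)" using e by simp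
  also have "\<dots> = d a0 * markov n (ep a0) (ep a0)" using coef[OF a0, of d] by simp
  finally have "c a0 * markov n (ep a0) (ep a0) = d a0 * markov n (ep a0) (ep a0)" .
  then show ?thesis using norm_nz[OF a0] by auto
qed

lemma ep_inj: "inj_on ep (RS n)"
proof (rule inj_onI)
  fix x y assume x: "x \<in> RS n" and y: "y \<in> RS n" and e: "ep x = ep y"
  show "x = y"
  proof (rule ccontr)
    assume "x \<noteq> y"
    then have "markov n (ep x) (ep y) = 0" using orthRS[OF x y] by simp
    then show False using norm_nz[OF x] e by simp
  qed
qed

lemma sum_B: "(\<Sum>e\<in>ep ` RS n. (\<lambda>x. u e * e x)) = (\<lambda>b. \<Sum>al\<in>RS n. u (ep al) * ep al b)"
  by (simp add: fun_eq_iff sum_app sum.reindex[OF ep_inj])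

lemma supp_span: "supp n v \<Longrightarrow> v \<in> VS.span (delta ` D n)"
proof -
  assume s: "supp n v"
  have "v = (\<Sum>b\<in>D n. (\<lambda>x. v b * delta b x))"
  proof (rule ext)
    fix x
    have "(\<Sum>b\<in>D n. (\<lambda>x. v b * delta b x)) x = (\<Sum>b\<in>D n. v b * delta b x)" by (rule sum_app)
    also have "\<dots> = (\<Sum>b\<in>D n. if b = x then v b else 0)"
      by (intro sum.cong refl) (auto simp: delta_def)
    also have "\<dots> = v x" using s unfolding supp_def by (simp add: finite_D)
    finally show "v x = (\<Sum>b\<in>D n. (\<lambda>x. v b * delta b x)) x" by simp
  qed
  also have "\<dots> \<in> VS.span (delta ` D n)"
    by (intro VS.span_sum VS.span_scale VS.span_base) auto
  finally show ?thesis .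
qed

lemma indep: "VS.independent (ep ` RS n)"
proof (rule VS.independent_if_scalars_zero)
  show "finite (ep ` RS n)" using finite_RS by simp
  fix f x assume z: "(\<Sum>x\<in>ep ` RS n. (\<lambda>y. f x * x y)) = 0" and x: "x \<in> ep ` RS n"
  then obtain a0 where a0: "a0 \<in> RS n" "x = ep a0" by blast
  have e: "(\<lambda>b. \<Sum>al\<in>RS n. f (ep al) * ep al b) = (\<lambda>b. \<Sum>al\<in>RS n. (\<lambda>al. 0) al * ep al b)"
    using z sum_B[of f] by (simp add: zero_fun_def)
  from coef_unique[OF a0(1) e] a0 show "f x = 0" by simp
qed

lemma spanning: "supp n v \<Longrightarrow> v \<in> VS.span (ep ` RS n)"
proof (rule ccontr)
  assume s: "supp n v" and ns: "v \<notin> VS.span (ep ` RS n)"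
  let ?B = "insert v (ep ` RS n)"
  have i: "VS.independent ?B" using VS.independent_insertI[OF ns indep] .
  have "?B \<subseteq> VS.span (delta ` D n)" using supp_span s supp_RS by auto
  then have "VS.dim ?B \<le> card (delta ` D n)" using VS.dim_le_card finite_D by blast
  also have "\<dots> \<le> card (D n)" by (rule card_image_le[OF finite_D])
  also have "\<dots> = card (ep ` RS n)" using card_RS card_image[OF ep_inj] by simp
  finally have "card ?B \<le> card (ep ` RS n)" using VS.dim_eq_card_independent[OF i] by simp
  moreover have "v \<notin> ep ` RS n" using ns VS.span_base by blast
  ultimately show False using finite_RS by simp
qed

lemma basis_ex1:
  assumes s: "\<forall>b. b \<notin> D n \<longrightarrow> v b = 0"
  shows "\<exists>!c :: nat list \<Rightarrow> K. (\<forall>al. al \<notin> RS n \<longrightarrow> c al = 0) \<and> v = (\<lambda>b. \<Sum>al\<in>RS n. c al * ep al b)"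
proof -
  have "v \<in> VS.span (ep ` RS n)" using spanning s supp_def by blast
  then obtain u where u: "v = (\<Sum>e\<in>ep ` RS n. (\<lambda>x. u e * e x))"
    using VS.span_finite[of "ep ` RS n"] finite_RS by auto
  define c where "c al = (if al \<in> RS n then u (ep al) else 0)" for al
  have "v = (\<lambda>b. \<Sum>al\<in>RS n. c al * ep al b)"
    unfolding u sum_B c_def by (intro ext sum.cong refl) simp
  moreover have "\<forall>al. al \<notin> RS n \<longrightarrow> c al = 0" unfolding c_def by simp
  ultimately show ?thesis
  proof (intro ex1I[of _ c] conjI)
    fix d assume d: "(\<forall>al. al \<notin> RS n \<longrightarrow> d al = 0) \<and> v = (\<lambda>b. \<Sum>al\<in>RS n. d al * ep al b)"
    show "d = c"
    proof (rule ext)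
      fix al show "d al = c al"
      proof (cases "al \<in> RS n")
        case True then show ?thesis
          using coef_unique[OF True, of d c] d \<open>v = (\<lambda>b. \<Sum>al\<in>RS n. c al * ep al b)\<close> by simp
      next
        case False then show ?thesis using d c_def by simp
      qed
    qed
  qed auto
qed

end

theorem mainTheorem1:
  fixes n :: nat
  assumes "n \<ge> 1"
  shows "(\<forall>\<alpha>\<in>RS n. \<forall>\<beta>. \<beta> \<notin> D n \<longrightarrow> ep \<alpha> \<beta> = 0)
       \<and> (\<forall>v :: vec. (\<forall>\<beta>. \<beta> \<notin> D n \<longrightarrow> v \<beta> = 0) \<longrightarrow>
            (\<exists>!c :: nat list \<Rightarrow> K. (\<forall>\<alpha>. \<alpha> \<notin> RS n \<longrightarrow> c \<alpha> = 0)
                 \<and> v = (\<lambda>\<beta>. \<Sum>\<alpha>\<in>RS n. c \<alpha> * ep \<alpha> \<beta>)))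
       \<and> (\<forall>\<alpha>\<in>RS n. markov n (ep \<alpha>) (ep \<alpha>) = (\<Prod>a\<leftarrow>\<alpha>. Delta a / Delta (a - 1)))
       \<and> (\<forall>\<alpha>\<in>RS n. \<forall>\<beta>\<in>RS n. \<beta> \<noteq> \<alpha> \<longrightarrow> markov n (ep \<beta>) (ep \<alpha>) = 0)"
  using supp_RS[OF assms] basis_ex1[OF assms] orthRS[OF assms] unfolding supp_def by auto

end
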